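(* Let $(X,\kappa)$ be a finite digital image and $f:X\to X$ a continuous self-map with $L(f)\neq 0$. Then every continuous map $g:X\to X$ with $g\simeq^* f$ has a fixed point or at least two approximate fixed points.
   Context: A digital image is a pair $(X,\kappa)$ where $X$ is a set and $\kappa$ is a symmetric irreflexive relation on $X$ (the adjacency). Write $x\leftrightarrow y$ if adjacent, $x\Leftrightarrow y$ if adjacent or equal. A map $f$ is continuous if $x\leftrightarrow y$ implies $f(x)\Leftrightarrow f(y)$. A point $x$ is an approximate fixed point of $f:X\to X$ if $f(x)\Leftrightarrow x$. The digital interval $[0,m]_{\mathbb Z}$ has consecutive integers adjacent. Continuous $f,g:X\to Y$ are strongly homotopic ($f\simeq^* g$) if there exist $m\ge1$ and $H:X\times[0,m]_{\mathbb Z}\to Y$ with $H(\cdot,0)=f$, $H(\cdot,m)=g$, such that whenever $(x,t)\neq(x',t')$, $x\Leftrightarrow x'$ and $|t-t'|\le1$, we have $H(x,t)\Leftrightarrow H(x',t')$. Simplicial homology: a $q$-simplex of $X$ is a set of $q+1$ pairwise adjacent points. $C_q(X)$ is the free abelian group generated by ordered $q$-simplices $\langle x_0,\dots,x_q\rangle$ modulo $\langle x_{\rho(0)},\dots,x_{\rho(q)}\rangle=\operatorname{sgn}(\rho)\langle x_0,\dots,x_q\rangle$, with boundary $\partial\langle x_0,\dots,x_q\rangle=\sum_{i=0}^q(-1)^i\langle x_0,\dots,\widehat{x_i},\dots,x_q\rangle$; $H_q(X)$ is its homology. For continuous $f$, $f_q\langle p_0,\dots,p_q\rangle=\langle f(p_0),\dots,f(p_q)\rangle$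 (interpreted as $0$ if the image has fewer than $q+1$ points); this is a chain map inducing $f_{*,q}$ on $H_q$. The simplicial Lefschetz number of a self-map $f$ of a finite image is $L(f)=\sum_{q\ge0}(-1)^q\operatorname{tr}(f_{*,q})$, traces taken on $H_q(X)\otimes\mathbb Q$. *)

theory Defs
  imports "HOL-Combinatorics.Permutations" Complex_Main
begin

definition digital_image :: "'a set \<Rightarrow> ('a \<Rightarrow> 'a \<Rightarrow> bool) \<Rightarrow> bool" where
  "digital_image X adj \<longleftrightarrow> (\<forall>x y. adj x y \<longrightarrow> adj y x) \<and> (\<forall>x. \<not> adj x x)"

definition adj_eq :: "('a \<Rightarrow> 'a \<Rightarrow> bool) \<Rightarrow> 'a \<Rightarrow> 'a \<Rightarrow> bool" where
  "adj_eq adj x y \<longleftrightarrow> adj x y \<or> x = y"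

definition dcontinuous :: "'a set \<Rightarrow> ('a \<Rightarrow> 'a \<Rightarrow> bool) \<Rightarrow> ('a \<Rightarrow> 'a) \<Rightarrow> bool" where
  "dcontinuous X adj f \<longleftrightarrow> (\<forall>x\<in>X. f x \<in> X) \<and>
     (\<forall>x\<in>X. \<forall>y\<in>X. adj x y \<longrightarrow> adj_eq adj (f x) (f y))"

definition approx_fixed_point :: "('a \<Rightarrow> 'a \<Rightarrow> bool) \<Rightarrow> ('a \<Rightarrow> 'a) \<Rightarrow> 'a \<Rightarrow> bool" where
  "approx_fixed_point adj f x \<longleftrightarrow> adj_eq adj (f x) x"

definition strongly_homotopic ::
  "'a set \<Rightarrow> ('a \<Rightarrow> 'a \<Rightarrow> bool) \<Rightarrow> ('a \<Rightarrow> 'a) \<Rightarrow> ('a \<Rightarrow> 'a) \<Rightarrow> bool" where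
  "strongly_homotopic X adj f g \<longleftrightarrow>
     (\<exists>(m::nat) (H :: 'a \<Rightarrow> nat \<Rightarrow> 'a). m \<ge> 1 \<and>
        (\<forall>x\<in>X. \<forall>t\<le>m. H x t \<in> X) \<and>
        (\<forall>x\<in>X. H x 0 = f x) \<and> (\<forall>x\<in>X. H x m = g x) \<and>
        (\<forall>x\<in>X. \<forall>x'\<in>X. \<forall>t\<le>m. \<forall>t'\<le>m.
            (x, t) \<noteq> (x', t') \<and> adj_eq adj x x' \<and> t \<le> t' + 1 \<and> t' \<le> t + 1
            \<longrightarrow> adj_eq adj (H x t) (H x' t')))"

text \<open>A q-chain (tensored with Q) is represented as an alternating rational-valued function on
ordered q-simplices: the value at (x0,...,xq) is the coefficient of the oriented generator
<x0,...,xq>; alternation encodes the relation <x_rho(0),...> = sgn(rho) <x0,...>.\<close>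

definition ordered_simplex :: "'a set \<Rightarrow> ('a \<Rightarrow> 'a \<Rightarrow> bool) \<Rightarrow> 'a list \<Rightarrow> bool" where
  "ordered_simplex X adj xs \<longleftrightarrow> xs \<noteq> [] \<and> distinct xs \<and> set xs \<subseteq> X \<and>
     (\<forall>x\<in>set xs. \<forall>y\<in>set xs. x \<noteq> y \<longrightarrow> adj x y)"

definition chains :: "'a set \<Rightarrow> ('a \<Rightarrow> 'a \<Rightarrow> bool) \<Rightarrow> nat \<Rightarrow> ('a list \<Rightarrow> rat) set" where
  "chains X adj q = {c. (\<forall>xs. c xs \<noteq> 0 \<longrightarrow> ordered_simplex X adj xs \<and> length xs = Suc q) \<and>
      (\<forall>xs p. p permutes {..<length xs} \<longrightarrow>
          c (permute_list p xs) = of_int (sign p) * c xs)}"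

text \<open>Boundary: linear extension of the alternating-sum formula; at an ordered simplex
(y1,...,yq) its coefficient is the sum over v of c(v,y1,...,yq).\<close>

definition boundary :: "'a set \<Rightarrow> ('a \<Rightarrow> 'a \<Rightarrow> bool) \<Rightarrow> ('a list \<Rightarrow> rat) \<Rightarrow> 'a list \<Rightarrow> rat" where
  "boundary X adj c ys = (if ordered_simplex X adj ys then (\<Sum>v\<in>X. c (v # ys)) else 0)"

text \<open>Induced chain map: linear extension of <p0,...,pq> \<mapsto> <f p0,...,f pq>
(zero when the image has fewer than q+1 points).\<close>

definition chain_map :: "'a set \<Rightarrow> ('a \<Rightarrow> 'a \<Rightarrow> bool) \<Rightarrow> ('a \<Rightarrow> 'a) \<Rightarrow> ('a list \<Rightarrow> rat) \<Rightarrow> 'a list \<Rightarrow> rat" where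
  "chain_map X adj f c ys = (if ordered_simplex X adj ys
      then (\<Sum>xs\<in>{xs. set xs \<subseteq> X \<and> map f xs = ys}. c xs) else 0)"

definition cycles :: "'a set \<Rightarrow> ('a \<Rightarrow> 'a \<Rightarrow> bool) \<Rightarrow> nat \<Rightarrow> ('a list \<Rightarrow> rat) set" where
  "cycles X adj q = {c \<in> chains X adj q. boundary X adj c = (\<lambda>_. 0)}"

definition boundaries :: "'a set \<Rightarrow> ('a \<Rightarrow> 'a \<Rightarrow> bool) \<Rightarrow> nat \<Rightarrow> ('a list \<Rightarrow> rat) set" where
  "boundaries X adj q = boundary X adj ` chains X adj (Suc q)"

definition lincomb :: "rat list \<Rightarrow> ('b \<Rightarrow> rat) list \<Rightarrow> 'b \<Rightarrow> rat" where
  "lincomb a cs = (\<lambda>y. \<Sum>i<length cs. a ! i * (cs ! i) y)"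

definition quot_coeffs :: "('b \<Rightarrow> rat) set \<Rightarrow> ('b \<Rightarrow> rat) list \<Rightarrow> ('b \<Rightarrow> rat) \<Rightarrow> rat list \<Rightarrow> bool" where
  "quot_coeffs B cs z a \<longleftrightarrow> length a = length cs \<and> (\<lambda>y. z y - lincomb a cs y) \<in> B"

definition quot_basis :: "('b \<Rightarrow> rat) set \<Rightarrow> ('b \<Rightarrow> rat) set \<Rightarrow> ('b \<Rightarrow> rat) list \<Rightarrow> bool" where
  "quot_basis Z B cs \<longleftrightarrow> set cs \<subseteq> Z \<and> (\<forall>z\<in>Z. \<exists>!a. quot_coeffs B cs z a)"

definition quot_trace ::
  "('b \<Rightarrow> rat) set \<Rightarrow> ('b \<Rightarrow> rat) set \<Rightarrow> (('b \<Rightarrow> rat) \<Rightarrow> ('b \<Rightarrow> rat)) \<Rightarrow> rat" where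
  "quot_trace Z B T = (let cs = (SOME cs. quot_basis Z B cs) in
      \<Sum>i<length cs. (THE a. quot_coeffs B cs (T (cs ! i)) a) ! i)"

text \<open>Simplicial Lefschetz number. Homology vanishes in degrees q \<ge> card X (no simplex has
more than card X points), so the sum over q \<ge> 0 is the finite sum over q \<le> card X.\<close>

definition lefschetz :: "'a set \<Rightarrow> ('a \<Rightarrow> 'a \<Rightarrow> bool) \<Rightarrow> ('a \<Rightarrow> 'a) \<Rightarrow> rat" where
  "lefschetz X adj f = (\<Sum>q\<le>card X. (-1) ^ q *
      quot_trace (cycles X adj q) (boundaries X adj q) (chain_map X adj f))"

end

theory Submission
  imports Defs "HOL-Library.Function_Algebras"
begin


definition subsp :: "('b \<Rightarrow> rat) set \<Rightarrow> bool" where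
  "subsp W \<longleftrightarrow> (\<lambda>_. 0) \<in> W \<and> (\<forall>x\<in>W. \<forall>y\<in>W. (\<lambda>t. x t + y t) \<in> W) \<and>
      (\<forall>r. \<forall>x\<in>W. (\<lambda>t. r * x t) \<in> W)"

lemma subsp_zero: "subsp W \<Longrightarrow> (\<lambda>_. 0) \<in> W"
  by (simp add: subsp_def)
lemma subsp_add: "subsp W \<Longrightarrow> x \<in> W \<Longrightarrow> y \<in> W \<Longrightarrow> (\<lambda>t. x t + y t) \<in> W"
  by (simp add: subsp_def)
lemma subsp_scale: "subsp W \<Longrightarrow> x \<in> W \<Longrightarrow> (\<lambda>t. r * x t) \<in> W"
  by (simp add: subsp_def)
lemma subsp_diff: assumes "subsp W" "x \<in> W" "y \<in> W" shows "(\<lambda>t. x t - y t) \<in> W"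
proof -
  have "(\<lambda>t. x t + (\<lambda>t. (-1) * y t) t) \<in> W"
    by (intro subsp_add subsp_scale assms)
  thus ?thesis by simp
qed
lemma subsp_sum:
  assumes "subsp W" "finite I" "\<And>i. i \<in> I \<Longrightarrow> x i \<in> W"
  shows "(\<lambda>t. \<Sum>i\<in>I. c i * x i t) \<in> W"
  using assms(2,3)
proof (induction I rule: finite_induct)
  case empty thus ?case using subsp_zero[OF assms(1)] by simp
next
  case (insert a F)
  have "(\<lambda>t. (\<lambda>t. c a * x a t) t + (\<lambda>t. \<Sum>i\<in>F. c i * x i t) t) \<in> W"
    by (intro subsp_add subsp_scale assms(1)) (use insert in auto)
  thus ?case using insert by simp
qed

definition eqv :: "('b \<Rightarrow> rat) set \<Rightarrow> ('b \<Rightarrow> rat) \<Rightarrow> ('b \<Rightarrow> rat) \<Rightarrow> bool" where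
  "eqv B x y \<longleftrightarrow> (\<lambda>t. x t - y t) \<in> B"

lemma eqv_refl: "subsp B \<Longrightarrow> eqv B x x"
  by (simp add: eqv_def subsp_zero)
lemma eqv_eq: "subsp B \<Longrightarrow> x = y \<Longrightarrow> eqv B x y"
  by (simp add: eqv_refl)
lemma eqv_sym: assumes "subsp B" "eqv B x y" shows "eqv B y x"
proof -
  have "(\<lambda>t. (-1) * (\<lambda>t. x t - y t) t) \<in> B"
    using assms by (intro subsp_scale) (auto simp: eqv_def)
  thus ?thesis by (simp add: eqv_def)
qed
lemma eqv_trans: assumes "subsp B" "eqv B x y" "eqv B y z" shows "eqv B x z"
proof -
  have "(\<lambda>t. (\<lambda>t. x t - y t) t + (\<lambda>t. y t - z t) t) \<in> B"
    using assms by (intro subsp_add) (auto simp: eqv_def)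
  thus ?thesis by (simp add: eqv_def)
qed
lemma eqv_sum:
  assumes "subsp B" "finite I" "\<And>i. i \<in> I \<Longrightarrow> eqv B (x i) (y i)"
  shows "eqv B (\<lambda>t. \<Sum>i\<in>I. c i * x i t) (\<lambda>t. \<Sum>i\<in>I. c i * y i t)"
proof -
  have "(\<lambda>t. \<Sum>i\<in>I. c i * (\<lambda>t. x i t - y i t) t) \<in> B"
    using assms by (intro subsp_sum) (auto simp: eqv_def)
  thus ?thesis by (simp add: eqv_def sum_subtractf right_diff_distrib)
qed
lemma eqv_mem: "subsp B \<Longrightarrow> eqv B x y \<Longrightarrow> y \<in> B \<Longrightarrow> x \<in> B"
proof -
  assume a: "subsp B" "eqv B x y" "y \<in> B"
  have "(\<lambda>t. (\<lambda>t. x t - y t) t + y t) \<in> B"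
    using a by (intro subsp_add) (auto simp: eqv_def)
  thus "x \<in> B" by simp
qed

definition lin :: "(('b \<Rightarrow> rat) \<Rightarrow> ('c \<Rightarrow> rat)) \<Rightarrow> bool" where
  "lin T \<longleftrightarrow> (\<forall>x y. T (\<lambda>t. x t + y t) = (\<lambda>t. T x t + T y t)) \<and>
     (\<forall>r x. T (\<lambda>t. r * x t) = (\<lambda>t. r * T x t))"

lemma lin_add: "lin T \<Longrightarrow> T (\<lambda>t. x t + y t) = (\<lambda>t. T x t + T y t)"
  by (simp add: lin_def)
lemma lin_scale: "lin T \<Longrightarrow> T (\<lambda>t. r * x t) = (\<lambda>t. r * T x t)"
  by (simp add: lin_def)

lemma lin_zero: assumes "lin T" shows "T (\<lambda>_. 0) = (\<lambda>_. 0)"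
  using lin_scale[OF assms, of 0 "\<lambda>_. 0"] by simp

lemma lin_sum:
  assumes "lin T" "finite I"
  shows "T (\<lambda>t. \<Sum>i\<in>I. c i * x i t) = (\<lambda>t. \<Sum>i\<in>I. c i * T (x i) t)"
  using assms(2)
proof (induction I rule: finite_induct)
  case empty thus ?case using lin_zero[OF assms(1)] by simp
next
  case (insert a F)
  have "T (\<lambda>t. \<Sum>i\<in>insert a F. c i * x i t) = T (\<lambda>t. c a * x a t + (\<Sum>i\<in>F. c i * x i t))"
    using insert by simp
  also have "\<dots> = (\<lambda>t. T (\<lambda>t. c a * x a t) t + T (\<lambda>t. \<Sum>i\<in>F. c i * x i t) t)"
    by (rule lin_add[OF assms(1)])
  also have "\<dots> = (\<lambda>t. c a * T (x a) t + (\<Sum>i\<in>F. c i * T (x i) t))"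
    using lin_scale[OF assms(1)] insert by simp
  finally show ?case using insert by simp
qed

lemma lin_diff:
  assumes "lin T" shows "T (\<lambda>t. x t - y t) = (\<lambda>t. T x t - T y t)"
proof -
  have "T (\<lambda>t. x t - y t) = T (\<lambda>t. x t + (-1) * y t)" by simp
  also have "\<dots> = (\<lambda>t. T x t + T (\<lambda>t. (-1) * y t) t)" by (rule lin_add[OF assms])
  also have "\<dots> = (\<lambda>t. T x t - T y t)" using lin_scale[OF assms, of "-1" y] by simp
  finally show ?thesis .
qed

lemma lin_eqv:
  assumes "lin T" "subsp B" "subsp B'" "T ` B \<subseteq> B'" "eqv B x y"
  shows "eqv B' (T x) (T y)"
proof -
  have "(\<lambda>t. x t - y t) \<in> B" using assms(5) by (simp add: eqv_def)
  hence "T (\<lambda>t. x t - y t) \<in> B'" using assms(4) by blast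
  thus ?thesis unfolding eqv_def lin_diff[OF assms(1)] .
qed

subsection \<open>Quotient bases\<close>

lemma lincomb_alt: "lincomb a cs = (\<lambda>y. \<Sum>i<length cs. a ! i * (cs ! i) y)"
  by (simp add: lincomb_def)

lemma lincomb_map: "lincomb (map f [0..<length cs]) cs = (\<lambda>y. \<Sum>i<length cs. f i * (cs ! i) y)"
  unfolding lincomb_def by (intro ext sum.cong) auto

definition indepm :: "('b \<Rightarrow> rat) set \<Rightarrow> ('b \<Rightarrow> rat) list \<Rightarrow> bool" where
  "indepm B cs \<longleftrightarrow> (\<forall>a. length a = length cs \<longrightarrow> lincomb a cs \<in> B \<longrightarrow> (\<forall>i<length cs. a ! i = 0))"

definition spansm :: "('b \<Rightarrow> rat) set \<Rightarrow> ('b \<Rightarrow> rat) set \<Rightarrow> ('b \<Rightarrow> rat) list \<Rightarrow> bool" where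
  "spansm Z B cs \<longleftrightarrow> (\<forall>z\<in>Z. \<exists>a. length a = length cs \<and> eqv B z (lincomb a cs))"

lemma quot_basis_iff:
  assumes "subsp B" "subsp Z"
  shows "quot_basis Z B cs \<longleftrightarrow> set cs \<subseteq> Z \<and> indepm B cs \<and> spansm Z B cs"
proof
  assume q: "quot_basis Z B cs"
  have sp: "spansm Z B cs"
    unfolding spansm_def eqv_def
  proof
    fix z assume "z \<in> Z"
    then obtain a where "quot_coeffs B cs z a" using q unfolding quot_basis_def by blast
    thus "\<exists>a. length a = length cs \<and> (\<lambda>t. z t - lincomb a cs t) \<in> B"
      unfolding quot_coeffs_def by blast
  qed
  have ind: "indepm B cs"
    unfolding indepm_def
  proof (intro allI impI)
    fix a i assume a: "length a = length cs" "lincomb a cs \<in> B" "i < length cs"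
    have z: "(\<lambda>_. 0) \<in> Z" using assms(2) by (rule subsp_zero)
    have u: "\<exists>!a. quot_coeffs B cs (\<lambda>_. 0) a" using q z unfolding quot_basis_def by blast
    have c1: "quot_coeffs B cs (\<lambda>_. 0) (replicate (length cs) 0)"
      unfolding quot_coeffs_def lincomb_def using subsp_zero[OF assms(1)] by simp
    have "(\<lambda>y. 0 - lincomb (map uminus a) cs y) = lincomb a cs"
      using a(1) unfolding lincomb_def by (auto simp: sum_negf[symmetric])
    hence "(\<lambda>y. 0 - lincomb (map uminus a) cs y) \<in> B"
      using a(2) by simp
    hence c2: "quot_coeffs B cs (\<lambda>_. 0) (map uminus a)"
      unfolding quot_coeffs_def using a(1) by simp
    have "map uminus a = replicate (length cs) 0" using u c1 c2 by blast
    hence "map uminus a ! i = 0" using a by simp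
    thus "a ! i = 0" using a by simp
  qed
  show "set cs \<subseteq> Z \<and> indepm B cs \<and> spansm Z B cs"
    using q sp ind unfolding quot_basis_def by blast
next
  assume r: "set cs \<subseteq> Z \<and> indepm B cs \<and> spansm Z B cs"
  have "\<exists>!a. quot_coeffs B cs z a" if z: "z \<in> Z" for z
  proof -
    obtain a where a: "length a = length cs" "eqv B z (lincomb a cs)"
      using r z unfolding spansm_def by blast
    show ?thesis
    proof (rule ex1I[of _ a])
      show "quot_coeffs B cs z a" using a unfolding quot_coeffs_def eqv_def by simp
    next
      fix a' assume "quot_coeffs B cs z a'"
      hence a': "length a' = length cs" "eqv B z (lincomb a' cs)"
        unfolding quot_coeffs_def eqv_def by auto
      have "eqv B (lincomb a' cs) (lincomb a cs)"
        using a a' assms(1) by (meson eqv_sym eqv_trans)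
      hence "(\<lambda>t. lincomb a' cs t - lincomb a cs t) \<in> B" by (simp add: eqv_def)
      moreover have "(\<lambda>t. lincomb a' cs t - lincomb a cs t) = lincomb (map (\<lambda>i. a' ! i - a ! i) [0..<length cs]) cs"
        unfolding lincomb_map by (simp add: lincomb_def sum_subtractf[symmetric] left_diff_distrib)
      ultimately have "lincomb (map (\<lambda>i. a' ! i - a ! i) [0..<length cs]) cs \<in> B" by simp
      hence *: "\<forall>i<length cs. (map (\<lambda>i. a' ! i - a ! i) [0..<length cs]) ! i = 0"
      proof -
        have ind: "indepm B cs" using r by blast
        have l: "length (map (\<lambda>i. a' ! i - a ! i) [0..<length cs]) = length cs" by simp
        show ?thesis using ind l \<open>lincomb (map (\<lambda>i. a' ! i - a ! i) [0..<length cs]) cs \<in> B\<close>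
          unfolding indepm_def by blast
      qed
      show "a' = a"
      proof (rule nth_equalityI)
        show "length a' = length a" using a a' by simp
        fix i assume "i < length a'"
        hence "i < length cs" using a' by simp
        hence "(map (\<lambda>i. a' ! i - a ! i) [0..<length cs]) ! i = 0" using * by blast
        thus "a' ! i = a ! i" using \<open>i < length cs\<close> by simp
      qed
    qed
  qed
  thus "quot_basis Z B cs" using r unfolding quot_basis_def by blast
qed

definition coef :: "('b \<Rightarrow> rat) set \<Rightarrow> ('b \<Rightarrow> rat) list \<Rightarrow> ('b \<Rightarrow> rat) \<Rightarrow> rat list" where
  "coef B cs z = (THE a. quot_coeffs B cs z a)"

lemma coef_prop:
  assumes "quot_basis Z B cs" "z \<in> Z"
  shows "length (coef B cs z) = length cs" "eqv B z (lincomb (coef B cs z) cs)"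
proof -
  have "quot_coeffs B cs z (coef B cs z)"
    unfolding coef_def by (rule theI') (use assms in \<open>auto simp: quot_basis_def\<close>)
  thus "length (coef B cs z) = length cs" "eqv B z (lincomb (coef B cs z) cs)"
    unfolding quot_coeffs_def eqv_def by auto
qed

lemma coef_unique:
  assumes "quot_basis Z B cs" "z \<in> Z" "length a = length cs" "eqv B z (lincomb a cs)"
  shows "coef B cs z = a"
proof -
  have h: "quot_coeffs B cs z a" using assms unfolding quot_coeffs_def eqv_def by auto
  have u: "\<exists>!a. quot_coeffs B cs z a" using assms unfolding quot_basis_def by blast
  show ?thesis unfolding coef_def using the1_equality[OF u h] .
qed

lemma coef_lc:
  assumes "quot_basis Z B cs" "z \<in> Z" "eqv B z (\<lambda>t. \<Sum>i<length cs. f i * (cs ! i) t)" "k < length cs"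
  shows "coef B cs z ! k = f k"
proof -
  have "coef B cs z = map f [0..<length cs]"
    using assms by (intro coef_unique[OF assms(1,2)]) (auto simp: lincomb_map)
  thus ?thesis using assms by simp
qed

definition trw :: "('b \<Rightarrow> rat) set \<Rightarrow> ('b \<Rightarrow> rat) list \<Rightarrow> (('b \<Rightarrow> rat) \<Rightarrow> ('b \<Rightarrow> rat)) \<Rightarrow> rat" where
  "trw B cs T = (\<Sum>i<length cs. coef B cs (T (cs ! i)) ! i)"

lemma quot_trace_eq: "quot_trace Z B T = trw B (SOME cs. quot_basis Z B cs) T"
  unfolding quot_trace_def trw_def coef_def Let_def by simp



lemma sum_split_add: "(\<Sum>i<(n::nat)+m. f i) = (\<Sum>i<n. f i) + (\<Sum>j<m. f (n+j) :: rat)"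
  by (induction m) (auto simp: add.assoc)

lemma expand:
  assumes "quot_basis Z B cs" "z \<in> Z"
  shows "eqv B z (\<lambda>t. \<Sum>i<length cs. coef B cs z ! i * (cs ! i) t)"
  using coef_prop[OF assms] by (simp add: lincomb_def)

lemma qb_mem: "quot_basis Z B cs \<Longrightarrow> k < length cs \<Longrightarrow> cs ! k \<in> Z"
  unfolding quot_basis_def by (meson nth_mem subsetD)

lemma sum3_swap: "(\<Sum>k\<in>K. \<Sum>i\<in>I. \<Sum>l\<in>L. f k i l) = (\<Sum>l\<in>L. \<Sum>k\<in>K. \<Sum>i\<in>I. (f k i l :: rat))"
proof -
  have "(\<Sum>k\<in>K. \<Sum>i\<in>I. \<Sum>l\<in>L. f k i l) = (\<Sum>k\<in>K. \<Sum>l\<in>L. \<Sum>i\<in>I. f k i l)"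
    by (rule sum.cong[OF refl]) (rule sum.swap)
  also have "\<dots> = (\<Sum>l\<in>L. \<Sum>k\<in>K. \<Sum>i\<in>I. f k i l)" by (rule sum.swap)
  finally show ?thesis .
qed

lemma trw_invariant:
  assumes sB: "subsp B" and sZ: "subsp Z" and lT: "lin T" and TZ: "T ` Z \<subseteq> Z" and TB: "T ` B \<subseteq> B"
    and qc: "quot_basis Z B cs" and qd: "quot_basis Z B ds"
  shows "trw B cs T = trw B ds T"
proof -
  have tr[trans]: "eqv B x y \<Longrightarrow> eqv B y z \<Longrightarrow> eqv B x z" for x y z using eqv_trans[OF sB] by blast
  define n where "n = length cs"
  define m where "m = length ds"
  define P where "P k j = coef B cs (ds ! j) ! k" for k j
  define Q where "Q l k = coef B ds (cs ! k) ! l" for l k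
  define A where "A i k = coef B cs (T (cs ! k)) ! i" for i k
  have csZ: "cs ! k \<in> Z" if "k < n" for k using qb_mem[OF qc] that n_def by simp
  have dsZ: "ds ! k \<in> Z" if "k < m" for k using qb_mem[OF qd] that m_def by simp
  have ds_exp: "eqv B (ds ! j) (\<lambda>t. \<Sum>k<n. P k j * (cs ! k) t)" if "j < m" for j
    using expand[OF qc dsZ[OF that]] unfolding P_def n_def .
  have cs_exp: "eqv B (cs ! k) (\<lambda>t. \<Sum>l<m. Q l k * (ds ! l) t)" if "k < n" for k
    using expand[OF qd csZ[OF that]] unfolding Q_def m_def .
  have Tcs_exp: "eqv B (T (cs ! k)) (\<lambda>t. \<Sum>i<n. A i k * (cs ! i) t)" if "k < n" for k
    using expand[OF qc, of "T (cs ! k)"] TZ csZ[OF that] unfolding A_def n_def by blast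
  have PQ: "(\<Sum>l<m. P i l * Q l k) = (if i = k then 1 else 0)" if "i < n" "k < n" for i k
  proof -
    have "eqv B (\<lambda>t. \<Sum>l<m. Q l k * (ds ! l) t) (\<lambda>t. \<Sum>l<m. Q l k * (\<lambda>t. \<Sum>i<n. P i l * (cs ! i) t) t)"
      using ds_exp by (intro eqv_sum sB) auto
    also have "(\<lambda>t. \<Sum>l<m. Q l k * (\<lambda>t. \<Sum>i<n. P i l * (cs ! i) t) t) = (\<lambda>t. \<Sum>i<n. (\<Sum>l<m. P i l * Q l k) * (cs ! i) t)"
      by (auto simp: sum_distrib_left sum_distrib_right mult_ac intro!: ext sum.swap)
    finally have h1: "eqv B (cs ! k) (\<lambda>t. \<Sum>i<length cs. (\<Sum>l<m. P i l * Q l k) * (cs ! i) t)"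
      using cs_exp[OF that(2)] sB eqv_trans n_def by blast
    have c1: "coef B cs (cs ! k) ! i = (\<Sum>l<m. P i l * Q l k)"
      using coef_lc[OF qc csZ[OF that(2)] h1] that unfolding n_def by blast
    have h2: "eqv B (cs ! k) (\<lambda>t. \<Sum>i<length cs. (if i = k then 1 else 0) * (cs ! i) t)"
    proof (intro eqv_eq sB ext)
      fix t
      have "(\<Sum>i<length cs. (if i = k then 1 else 0) * (cs ! i) t) = (\<Sum>i<length cs. if i = k then (cs ! i) t else 0)"
        by (rule sum.cong) auto
      also have "\<dots> = (cs ! k) t" using that n_def by simp
      finally show "(cs ! k) t = (\<Sum>i<length cs. (if i = k then 1 else 0) * (cs ! i) t)" by simp
    qed
    have "coef B cs (cs ! k) ! i = (if i = k then 1 else 0)"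
      using coef_lc[OF qc csZ[OF that(2)] h2] that unfolding n_def by blast
    with c1 show ?thesis by simp
  qed
  have Tds: "coef B ds (T (ds ! j)) ! l = (\<Sum>k<n. \<Sum>i<n. Q l i * A i k * P k j)" if "j < m" "l < m" for j l
  proof -
    have "eqv B (T (ds ! j)) (T (\<lambda>t. \<Sum>k<n. P k j * (cs ! k) t))"
      using lin_eqv[OF lT sB sB TB ds_exp[OF that(1)]] .
    also have "T (\<lambda>t. \<Sum>k<n. P k j * (cs ! k) t) = (\<lambda>t. \<Sum>k<n. P k j * T (cs ! k) t)"
      by (rule lin_sum[OF lT, of "{..<n}" "\<lambda>k. P k j" "\<lambda>k. cs ! k"]) simp
    also have "eqv B \<dots> (\<lambda>t. \<Sum>k<n. P k j * (\<lambda>t. \<Sum>i<n. A i k * (\<lambda>t. \<Sum>l<m. Q l i * (ds ! l) t) t) t)"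
    proof (intro eqv_sum sB, simp)
      fix k assume k: "k \<in> {..<n}"
      have "eqv B (T (cs ! k)) (\<lambda>t. \<Sum>i<n. A i k * (cs ! i) t)" using Tcs_exp k by simp
      also have "eqv B \<dots> (\<lambda>t. \<Sum>i<n. A i k * (\<lambda>t. \<Sum>l<m. Q l i * (ds ! l) t) t)"
        using cs_exp by (intro eqv_sum sB) auto
      finally show "eqv B (T (cs ! k)) (\<lambda>t. \<Sum>i<n. A i k * (\<lambda>t. \<Sum>l<m. Q l i * (ds ! l) t) t)"
        using sB eqv_trans by blast
    qed
    also have "(\<lambda>t. \<Sum>k<n. P k j * (\<lambda>t. \<Sum>i<n. A i k * (\<lambda>t. \<Sum>l<m. Q l i * (ds ! l) t) t) t)
        = (\<lambda>t. \<Sum>l<m. (\<Sum>k<n. \<Sum>i<n. Q l i * A i k * P k j) * (ds ! l) t)"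
    proof
      fix t
      have "(\<Sum>k<n. P k j * (\<Sum>i<n. A i k * (\<Sum>l<m. Q l i * (ds ! l) t)))
          = (\<Sum>k<n. \<Sum>i<n. \<Sum>l<m. Q l i * A i k * P k j * (ds ! l) t)"
        by (simp add: sum_distrib_left mult_ac)
      also have "\<dots> = (\<Sum>l<m. \<Sum>k<n. \<Sum>i<n. Q l i * A i k * P k j * (ds ! l) t)"
        by (rule sum3_swap)
      also have "\<dots> = (\<Sum>l<m. (\<Sum>k<n. \<Sum>i<n. Q l i * A i k * P k j) * (ds ! l) t)"
        by (simp add: sum_distrib_right)
      finally show "(\<lambda>t. \<Sum>k<n. P k j * (\<lambda>t. \<Sum>i<n. A i k * (\<lambda>t. \<Sum>l<m. Q l i * (ds ! l) t) t) t) t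
        = (\<lambda>t. \<Sum>l<m. (\<Sum>k<n. \<Sum>i<n. Q l i * A i k * P k j) * (ds ! l) t) t" by simp
    qed
    finally have h: "eqv B (T (ds ! j)) (\<lambda>t. \<Sum>l<length ds. (\<Sum>k<n. \<Sum>i<n. Q l i * A i k * P k j) * (ds ! l) t)"
      using sB eqv_trans m_def by blast
    have "T (ds ! j) \<in> Z" using TZ dsZ[OF that(1)] by blast
    thus ?thesis using coef_lc[OF qd _ h] that unfolding m_def by blast
  qed
  have "trw B ds T = (\<Sum>j<m. \<Sum>k<n. \<Sum>i<n. Q j i * A i k * P k j)"
    unfolding trw_def m_def[symmetric] by (intro sum.cong) (auto simp: Tds)
  also have "\<dots> = (\<Sum>k<n. \<Sum>i<n. \<Sum>j<m. Q j i * A i k * P k j)"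
    by (rule sum3_swap[symmetric])
  also have "\<dots> = (\<Sum>k<n. \<Sum>i<n. A i k * (\<Sum>j<m. P k j * Q j i))"
    by (simp add: sum_distrib_left mult_ac)
  also have "\<dots> = (\<Sum>k<n. \<Sum>i<n. A i k * (if k = i then 1 else 0))"
    by (intro sum.cong refl) (simp add: PQ)
  also have "\<dots> = (\<Sum>k<n. A k k)"
    by (simp add: if_distrib cong: if_cong)
  also have "\<dots> = trw B cs T"
    unfolding trw_def A_def n_def by simp
  finally show ?thesis by simp
qed

lemma quot_trace_basis:
  assumes "subsp B" "subsp Z" "lin T" "T ` Z \<subseteq> Z" "T ` B \<subseteq> B" "quot_basis Z B cs"
  shows "quot_trace Z B T = trw B cs T"
proof -
  have "quot_basis Z B (SOME cs. quot_basis Z B cs)" using assms(6) by (rule someI)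
  thus ?thesis unfolding quot_trace_eq using trw_invariant[OF assms(1-5)] assms(6) by blast
qed



definition Zero :: "('b \<Rightarrow> rat) set" where "Zero = {\<lambda>_. 0}"

lemma subsp_Zero: "subsp Zero"
  by (simp add: subsp_def Zero_def)

lemma eqv_Zero: "eqv Zero x y \<longleftrightarrow> x = y"
  by (auto simp: eqv_def Zero_def fun_eq_iff)

lemma lincomb_append:
  assumes "length a = length cs" "length b = length ds"
  shows "lincomb (a @ b) (cs @ ds) = (\<lambda>t. lincomb a cs t + lincomb b ds t)"
proof
  fix t
  show "lincomb (a @ b) (cs @ ds) t = lincomb a cs t + lincomb b ds t"
    unfolding lincomb_def using assms
    by (simp add: sum_split_add nth_append)
qed

lemma lincomb_mem: "subsp W \<Longrightarrow> set cs \<subseteq> W \<Longrightarrow> lincomb a cs \<in> W"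
  unfolding lincomb_def by (intro subsp_sum) auto

lemma lincomb_zero: "(\<And>i. i < length cs \<Longrightarrow> a ! i = 0) \<Longrightarrow> lincomb a cs = (\<lambda>_. 0)"
  unfolding lincomb_def by (intro ext sum.neutral) auto

lemma lincomb_replicate0: "lincomb (replicate (length ds) 0) ds = (\<lambda>_. 0)"
  by (rule lincomb_zero) (simp add: nth_replicate)

lemma qb_append:
  assumes sB: "subsp B" and sZ: "subsp Z" and sV: "subsp V" and BZ: "B \<subseteq> Z" and ZV: "Z \<subseteq> V"
    and qc: "quot_basis Z B cs" and qd: "quot_basis V Z ds"
  shows "quot_basis V B (cs @ ds)"
proof -
  have c: "set cs \<subseteq> Z" "indepm B cs" "spansm Z B cs" using qc quot_basis_iff[OF sB sZ] by auto
  have d: "set ds \<subseteq> V" "indepm Z ds" "spansm V Z ds" using qd quot_basis_iff[OF sZ sV] by auto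
  have "set (cs @ ds) \<subseteq> V" using c d ZV by auto
  moreover have "spansm V B (cs @ ds)"
    unfolding spansm_def
  proof
    fix v assume v: "v \<in> V"
    obtain b where b: "length b = length ds" "eqv Z v (lincomb b ds)" using d v unfolding spansm_def by blast
    define z where "z = (\<lambda>t. v t - lincomb b ds t)"
    have "z \<in> Z" using b(2) unfolding z_def eqv_def .
    then obtain a where a: "length a = length cs" "eqv B z (lincomb a cs)" using c unfolding spansm_def by blast
    have "eqv B v (lincomb (a @ b) (cs @ ds))"
      using a(2) unfolding lincomb_append[OF a(1) b(1)] eqv_def z_def by (simp add: algebra_simps)
    thus "\<exists>g. length g = length (cs @ ds) \<and> eqv B v (lincomb g (cs @ ds))"
      using a b by (intro exI[of _ "a @ b"]) simp
  qed
  moreover have "indepm B (cs @ ds)"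
    unfolding indepm_def
  proof (intro allI impI)
    fix g i assume g: "length g = length (cs @ ds)" "lincomb g (cs @ ds) \<in> B" "i < length (cs @ ds)"
    define a where "a = take (length cs) g"
    define b where "b = drop (length cs) g"
    have la: "length a = length cs" and lb: "length b = length ds" using g(1) by (auto simp: a_def b_def)
    have gab: "g = a @ b" by (simp add: a_def b_def)
    have sum: "(\<lambda>t. lincomb a cs t + lincomb b ds t) \<in> B"
      using g(2) unfolding gab lincomb_append[OF la lb] .
    have "lincomb a cs \<in> Z" using lincomb_mem[OF sZ c(1)] .
    hence "(\<lambda>t. (\<lambda>t. lincomb a cs t + lincomb b ds t) t - lincomb a cs t) \<in> Z"
      using sum BZ by (intro subsp_diff sZ) auto
    hence "lincomb b ds \<in> Z" by simp
    hence b0: "\<forall>j<length ds. b ! j = 0" using d(2) lb unfolding indepm_def by blast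
    have "lincomb b ds = (\<lambda>_. 0)" using b0 lincomb_zero by blast
    hence "lincomb a cs \<in> B" using sum by simp
    hence a0: "\<forall>j<length cs. a ! j = 0" using c(2) la unfolding indepm_def by blast
    show "g ! i = 0"
      using a0 b0 g(3) la unfolding gab by (auto simp: nth_append)
  qed
  ultimately show ?thesis using quot_basis_iff[OF sB sV] by blast
qed

lemma coef_append:
  assumes sB: "subsp B" and sZ: "subsp Z" and sV: "subsp V" and BZ: "B \<subseteq> Z" and ZV: "Z \<subseteq> V"
    and qc: "quot_basis Z B cs" and qd: "quot_basis V Z ds" and v: "v \<in> V"
  shows "coef B (cs @ ds) v = coef B cs (\<lambda>t. v t - lincomb (coef Z ds v) ds t) @ coef Z ds v"
proof -
  define b where "b = coef Z ds v"
  define z where "z = (\<lambda>t. v t - lincomb b ds t)"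
  have b: "length b = length ds" "eqv Z v (lincomb b ds)" using coef_prop[OF qd v] b_def by auto
  have zZ: "z \<in> Z" using b(2) unfolding z_def eqv_def .
  define a where "a = coef B cs z"
  have a: "length a = length cs" "eqv B z (lincomb a cs)" using coef_prop[OF qc zZ] a_def by auto
  have "eqv B v (lincomb (a @ b) (cs @ ds))"
    using a(2) unfolding lincomb_append[OF a(1) b(1)] eqv_def z_def by (simp add: algebra_simps)
  hence "coef B (cs @ ds) v = a @ b"
    using a b by (intro coef_unique[OF qb_append[OF assms(1-7)] v]) auto
  thus ?thesis unfolding a_def z_def b_def .
qed

lemma trw_append:
  assumes sB: "subsp B" and sZ: "subsp Z" and sV: "subsp V" and BZ: "B \<subseteq> Z" and ZV: "Z \<subseteq> V"
    and qc: "quot_basis Z B cs" and qd: "quot_basis V Z ds"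
    and lT: "lin T" and TV: "T ` V \<subseteq> V" and TZ: "T ` Z \<subseteq> Z"
  shows "trw B (cs @ ds) T = trw B cs T + trw Z ds T"
proof -
  let ?n = "length cs" and ?m = "length ds"
  have csZ: "cs ! i \<in> Z" if "i < ?n" for i using qb_mem[OF qc that] .
  have dsV: "ds ! j \<in> V" if "j < ?m" for j using qb_mem[OF qd that] .
  have 1: "coef B (cs @ ds) (T (cs ! i)) ! i = coef B cs (T (cs ! i)) ! i" if i: "i < ?n" for i
  proof -
    have TZi: "T (cs ! i) \<in> Z" using TZ csZ[OF i] by blast
    have TVi: "T (cs ! i) \<in> V" using TZi ZV by blast
    have "coef Z ds (T (cs ! i)) = replicate ?m 0"
      by (rule coef_unique[OF qd TVi]) (use TZi in \<open>simp_all add: lincomb_replicate0 eqv_def\<close>)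
    hence "coef B (cs @ ds) (T (cs ! i)) = coef B cs (T (cs ! i)) @ replicate ?m 0"
      using coef_append[OF assms(1-7) TVi] by (simp add: lincomb_replicate0)
    thus ?thesis using coef_prop(1)[OF qc TZi] i by (simp add: nth_append)
  qed
  have 2: "coef B (cs @ ds) (T (ds ! j)) ! (?n + j) = coef Z ds (T (ds ! j)) ! j" if j: "j < ?m" for j
  proof -
    have TVj: "T (ds ! j) \<in> V" using TV dsV[OF j] by blast
    define z where "z = (\<lambda>t. T (ds ! j) t - lincomb (coef Z ds (T (ds ! j))) ds t)"
    have "eqv Z (T (ds ! j)) (lincomb (coef Z ds (T (ds ! j))) ds)" using coef_prop(2)[OF qd TVj] .
    hence zZ: "z \<in> Z" unfolding z_def eqv_def .
    have "coef B (cs @ ds) (T (ds ! j)) = coef B cs z @ coef Z ds (T (ds ! j))"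
      using coef_append[OF assms(1-7) TVj] unfolding z_def .
    thus ?thesis using coef_prop(1)[OF qc zZ] by (simp add: nth_append)
  qed
  have "trw B (cs @ ds) T = (\<Sum>i<?n. coef B (cs @ ds) (T (cs ! i)) ! i) + (\<Sum>j<?m. coef B (cs @ ds) (T (ds ! j)) ! (?n + j))"
    unfolding trw_def by (simp add: sum_split_add nth_append)
  also have "\<dots> = trw B cs T + trw Z ds T"
    unfolding trw_def using 1 2 by simp
  finally show ?thesis .
qed

lemma subsp_ker:
  assumes "subsp C" "lin D"
  shows "subsp {c \<in> C. D c = (\<lambda>_. 0)}"
  using assms unfolding subsp_def by (auto simp: lin_add lin_scale lin_zero)

lemma subsp_img:
  assumes "subsp C" "lin D"
  shows "subsp (D ` C)"
  unfolding subsp_def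
proof (intro conjI ballI allI)
  show "(\<lambda>_. 0) \<in> D ` C" using lin_zero[OF assms(2)] subsp_zero[OF assms(1)] by (metis image_eqI)
next
  fix x y assume "x \<in> D ` C" "y \<in> D ` C"
  then obtain a b where "a \<in> C" "b \<in> C" "x = D a" "y = D b" by blast
  thus "(\<lambda>t. x t + y t) \<in> D ` C"
    using lin_add[OF assms(2), of a b, symmetric] subsp_add[OF assms(1)] by (metis image_eqI)
next
  fix r x assume "x \<in> D ` C"
  then obtain a where "a \<in> C" "x = D a" by blast
  thus "(\<lambda>t. r * x t) \<in> D ` C"
    using lin_scale[OF assms(2), of r a, symmetric] subsp_scale[OF assms(1)] by (metis image_eqI)
qed

lemma lincomb_lin:
  assumes "lin D" shows "D (lincomb a cs) = lincomb a (map D cs)"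
  unfolding lincomb_def using lin_sum[OF assms, of "{..<length cs}" "\<lambda>i. a ! i" "\<lambda>i. cs ! i"]
  by simp

lemma D_of_eqv:
  assumes "lin D" "eqv {c \<in> C. D c = (\<lambda>_. 0)} c (lincomb b ds)"
  shows "D c = lincomb b (map D ds)"
proof -
  have "D (\<lambda>t. c t - lincomb b ds t) = (\<lambda>_. 0)" using assms(2) by (simp add: eqv_def)
  hence "(\<lambda>t. D c t - D (lincomb b ds) t) = (\<lambda>_. 0)" by (simp add: lin_diff[OF assms(1)])
  hence "D c = D (lincomb b ds)" by (simp add: fun_eq_iff)
  thus ?thesis by (simp add: lincomb_lin[OF assms(1)])
qed

lemma trw_bd:
  assumes sC: "subsp C" and lD: "lin D" and lT: "lin T" and TC: "T ` C \<subseteq> C"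
    and comm: "\<And>c. c \<in> C \<Longrightarrow> T (D c) = D (T c)"
    and qd: "quot_basis C {c \<in> C. D c = (\<lambda>_. 0)} ds"
  shows "quot_basis (D ` C) Zero (map D ds) \<and>
    trw Zero (map D ds) T = trw {c \<in> C. D c = (\<lambda>_. 0)} ds T"
proof -
  let ?K = "{c \<in> C. D c = (\<lambda>_. 0)}"
  have sK: "subsp ?K" by (rule subsp_ker[OF sC lD])
  have sI: "subsp (D ` C)" by (rule subsp_img[OF sC lD])
  have d: "set ds \<subseteq> C" "indepm ?K ds" "spansm C ?K ds" using qd quot_basis_iff[OF sK sC] by auto
  have qb: "quot_basis (D ` C) Zero (map D ds)"
    unfolding quot_basis_iff[OF subsp_Zero sI]
  proof (intro conjI)
    show "set (map D ds) \<subseteq> D ` C" using d(1) by auto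
    show "indepm Zero (map D ds)"
      unfolding indepm_def
    proof (intro allI impI)
      fix g i assume g: "length g = length (map D ds)" "lincomb g (map D ds) \<in> Zero" "i < length (map D ds)"
      have "D (lincomb g ds) = (\<lambda>_. 0)" using g(2) by (simp add: lincomb_lin[OF lD] Zero_def)
      moreover have "lincomb g ds \<in> C" using lincomb_mem[OF sC d(1)] .
      ultimately have "lincomb g ds \<in> ?K" by simp
      thus "g ! i = 0" using d(2) g unfolding indepm_def by simp
    qed
    show "spansm (D ` C) Zero (map D ds)"
      unfolding spansm_def
    proof
      fix b assume "b \<in> D ` C"
      then obtain c where c: "c \<in> C" "b = D c" by blast
      obtain a where a: "length a = length ds" "eqv ?K c (lincomb a ds)" using d(3) c unfolding spansm_def by blast
      have "b = lincomb a (map D ds)" using D_of_eqv[OF lD a(2)] c by simp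
      thus "\<exists>a. length a = length (map D ds) \<and> eqv Zero b (lincomb a (map D ds))"
        using a(1) by (auto simp: eqv_Zero)
    qed
  qed
  have "coef Zero (map D ds) (T (map D ds ! j)) = coef ?K ds (T (ds ! j))" if j: "j < length ds" for j
  proof -
    have dj: "ds ! j \<in> C" using d(1) j by auto
    hence TC': "T (ds ! j) \<in> C" using TC by blast
    have e: "eqv ?K (T (ds ! j)) (lincomb (coef ?K ds (T (ds ! j))) ds)" using coef_prop(2)[OF qd TC'] .
    have "T (map D ds ! j) = D (T (ds ! j))" using comm[OF dj] j by simp
    also have "\<dots> = lincomb (coef ?K ds (T (ds ! j))) (map D ds)" by (rule D_of_eqv[OF lD e])
    finally have "T (map D ds ! j) = lincomb (coef ?K ds (T (ds ! j))) (map D ds)" .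
    moreover have "T (map D ds ! j) \<in> D ` C" using TC' comm[OF dj] j by auto
    ultimately show ?thesis
      using coef_prop(1)[OF qd TC'] by (intro coef_unique[OF qb]) (auto simp: eqv_Zero)
  qed
  hence "trw Zero (map D ds) T = trw ?K ds T" unfolding trw_def by simp
  with qb show ?thesis by blast
qed

lemma sum_fun_apply: "(sum g S) y = (\<Sum>s\<in>S. g s y)" for g :: "'i \<Rightarrow> 'b \<Rightarrow> rat"
  by (induction S rule: infinite_finite_induct) (auto simp: plus_fun_def zero_fun_def)

lemma indep_distinct:
  assumes "indepm Zero cs" shows "distinct cs"
proof (rule ccontr)
  assume "\<not> distinct cs"
  then obtain i j where ij: "i < length cs" "j < length cs" "i \<noteq> j" "cs ! i = cs ! j"
    by (auto simp: distinct_conv_nth)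
  define a where "a = map (\<lambda>k. if k = i then 1 else if k = j then -1 else (0::rat)) [0..<length cs]"
  have "lincomb a cs = (\<lambda>_. 0)"
  proof
    fix t
    have "lincomb a cs t = (\<Sum>k<length cs. (if k = i then 1 else if k = j then -1 else 0) * (cs ! k) t)"
      unfolding a_def lincomb_map by simp
    also have "\<dots> = (\<Sum>k<length cs. (if k = i then (cs ! k) t else 0) - (if k = j then (cs ! k) t else 0))"
      by (rule sum.cong) (use ij in auto)
    also have "\<dots> = 0" using ij by (simp add: sum_subtractf)
    finally show "lincomb a cs t = 0" .
  qed
  hence "lincomb a cs \<in> Zero" by (simp add: Zero_def)
  hence "a ! i = 0" using assms ij unfolding indepm_def a_def by simp
  thus False using ij unfolding a_def by simp
qed

lemma indep_bound:
  fixes cs :: "('b \<Rightarrow> rat) list"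
  assumes fin: "finite S" and supp: "\<And>c y. c \<in> set cs \<Longrightarrow> c y \<noteq> 0 \<Longrightarrow> y \<in> S"
    and ind: "indepm Zero cs"
  shows "length cs \<le> card S"
proof -
  interpret V: vector_space "\<lambda>(r::rat) (f::'b \<Rightarrow> rat) y. r * f y"
    by unfold_locales (auto simp: fun_eq_iff algebra_simps plus_fun_def)
  define \<delta> where "\<delta> s = (\<lambda>y::'b. if y = s then (1::rat) else 0)" for s :: 'b
  have dist: "distinct cs" using indep_distinct[OF ind] .
  have span: "set cs \<subseteq> V.span (\<delta> ` S)"
  proof
    fix c assume c: "c \<in> set cs"
    have "c = (\<Sum>s\<in>S. (\<lambda>y. c s * \<delta> s y))"
    proof
      fix y
      have "(\<Sum>s\<in>S. (\<lambda>y. c s * \<delta> s y)) y = (\<Sum>s\<in>S. c s * \<delta> s y)" by (rule sum_fun_apply)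
      also have "\<dots> = (\<Sum>s\<in>S. if s = y then c y else 0)" by (rule sum.cong) (auto simp: \<delta>_def)
      also have "\<dots> = c y" using fin supp[OF c, of y] by auto
      finally show "c y = (\<Sum>s\<in>S. (\<lambda>y. c s * \<delta> s y)) y" by simp
    qed
    also have "\<dots> \<in> V.span (\<delta> ` S)"
      by (intro V.span_sum V.span_scale V.span_base) auto
    finally show "c \<in> V.span (\<delta> ` S)" .
  qed
  have indep: "V.independent (set cs)"
  proof
    assume "V.dependent (set cs)"
    then obtain t u where tu: "finite t" "t \<subseteq> set cs" "(\<Sum>v\<in>t. (\<lambda>y. u v * v y)) = 0" "\<exists>v\<in>t. u v \<noteq> 0"
      unfolding V.dependent_explicit by blast
    define a where "a = map (\<lambda>i. if cs ! i \<in> t then u (cs ! i) else 0) [0..<length cs]"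
    have "lincomb a cs = (\<lambda>_. 0)"
    proof
      fix y
      have "lincomb a cs y = (\<Sum>i<length cs. (\<lambda>v. if v \<in> t then u v * v y else 0) (cs ! i))"
        unfolding a_def lincomb_map by (auto intro!: sum.cong)
      also have "\<dots> = (\<Sum>v\<in>set cs. (if v \<in> t then u v * v y else 0))"
        using sum.reindex_bij_betw[OF bij_betw_nth[OF dist refl refl], of "\<lambda>v. if v \<in> t then u v * v y else 0"]
        by simp
      also have "\<dots> = (\<Sum>v\<in>set cs \<inter> t. u v * v y)"
        by (simp add: sum.inter_restrict)
      also have "\<dots> = (\<Sum>v\<in>t. u v * v y)" using tu(2) by (simp add: Int_absorb1)
      also have "\<dots> = (\<Sum>v\<in>t. (\<lambda>y. u v * v y)) y" by (rule sum_fun_apply[symmetric])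
      also have "\<dots> = 0" using tu(3) by simp
      finally show "lincomb a cs y = 0" .
    qed
    hence a0: "\<forall>i<length cs. a ! i = 0" using ind unfolding indepm_def Zero_def a_def by simp
    obtain v where v: "v \<in> t" "u v \<noteq> 0" using tu(4) by blast
    then obtain i where i: "i < length cs" "cs ! i = v" using tu(2) by (metis in_set_conv_nth subsetD)
    have "a ! i = u v" using i v unfolding a_def by simp
    thus False using a0 i v by simp
  qed
  have "finite (set cs) \<and> card (set cs) \<le> card (\<delta> ` S)"
    using V.independent_span_bound[OF finite_imageI[OF fin] indep span] .
  moreover have "card (\<delta> ` S) \<le> card S" using card_image_le[OF fin] .
  ultimately show ?thesis using distinct_card[OF dist] by simp
qed

lemma qb_exists:
  assumes sB: "subsp B" and sZ: "subsp Z" and BZ: "B \<subseteq> Z" and fin: "finite S"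
    and supp: "\<And>z y. z \<in> Z \<Longrightarrow> z y \<noteq> 0 \<Longrightarrow> y \<in> S"
  shows "\<exists>cs. quot_basis Z B cs"
proof -
  define L where "L = {cs. set cs \<subseteq> Z \<and> indepm B cs}"
  have bound: "length cs \<le> card S" if "cs \<in> L" for cs
  proof (rule indep_bound[OF fin])
    show "\<And>c y. c \<in> set cs \<Longrightarrow> c y \<noteq> 0 \<Longrightarrow> y \<in> S" using that supp unfolding L_def by blast
    show "indepm Zero cs" unfolding indepm_def
    proof (intro allI impI)
      fix a i assume a: "length a = length cs" "lincomb a cs \<in> Zero" "i < length cs"
      have "lincomb a cs \<in> B" using a(2) subsp_zero[OF sB] by (simp add: Zero_def)
      moreover have "indepm B cs" using that unfolding L_def by blast
      ultimately show "a ! i = 0" using a unfolding indepm_def by blast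
    qed
  qed
  have "[] \<in> L" unfolding L_def indepm_def by simp
  have "length ` L \<subseteq> {..card S}" using bound by auto
  hence finL: "finite (length ` L)" using finite_subset by blast
  define N where "N = Max (length ` L)"
  have "N \<in> length ` L" unfolding N_def using finL \<open>[] \<in> L\<close> by (intro Max_in) auto
  then obtain cs where cs: "cs \<in> L" "length cs = N" by blast
  have maxi: "length cs' \<le> N" if "cs' \<in> L" for cs' unfolding N_def
    by (rule Max_ge[OF finL]) (use that in blast)
  have "spansm Z B cs"
    unfolding spansm_def
  proof (rule ccontr)
    assume "\<not> (\<forall>z\<in>Z. \<exists>a. length a = length cs \<and> eqv B z (lincomb a cs))"
    then obtain z where z: "z \<in> Z" "\<And>a. length a = length cs \<Longrightarrow> \<not> eqv B z (lincomb a cs)" by blast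
    have "cs @ [z] \<in> L"
      unfolding L_def
    proof (intro CollectI conjI)
      show "set (cs @ [z]) \<subseteq> Z" using cs z unfolding L_def by auto
      show "indepm B (cs @ [z])"
        unfolding indepm_def
      proof (intro allI impI)
        fix g i assume g: "length g = length (cs @ [z])" "lincomb g (cs @ [z]) \<in> B" "i < length (cs @ [z])"
        define a where "a = take (length cs) g"
        define r where "r = g ! length cs"
        have la: "length a = length cs" using g(1) by (simp add: a_def)
        have d1: "drop (length cs) g = g ! length cs # drop (Suc (length cs)) g"
          by (rule Cons_nth_drop_Suc[symmetric]) (use g(1) in simp)
        have d2: "drop (Suc (length cs)) g = []" using g(1) by simp
        have "drop (length cs) g = [r]" unfolding r_def using d1 d2 by simp
        hence gar: "g = a @ [r]" unfolding a_def by (metis append_take_drop_id)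
        have lz: "lincomb [r] [z] = (\<lambda>t. r * z t)" by (simp add: lincomb_def)
        have sum: "(\<lambda>t. lincomb a cs t + r * z t) \<in> B"
          using g(2) unfolding gar lincomb_append[OF la, of "[r]" "[z]", simplified] lz .
        have r0: "r = 0"
        proof (rule ccontr)
          assume r: "r \<noteq> 0"
          define a' where "a' = map (\<lambda>i. - (a ! i) / r) [0..<length cs]"
          have "(\<lambda>t. (1 / r) * (\<lambda>t. lincomb a cs t + r * z t) t) \<in> B" using sum by (intro subsp_scale sB)
          moreover have "(\<lambda>t. (1 / r) * (\<lambda>t. lincomb a cs t + r * z t) t) = (\<lambda>t. z t - lincomb a' cs t)"
          proof
            fix t
            have "lincomb a' cs t = (\<Sum>i<length cs. - (a ! i * (cs ! i) t) / r)"
              unfolding a'_def lincomb_map by simp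
            also have "\<dots> = - lincomb a cs t / r"
              unfolding lincomb_def by (simp add: sum_divide_distrib[symmetric] sum_negf)
            finally have "lincomb a' cs t = - lincomb a cs t / r" .
            thus "(1 / r) * (lincomb a cs t + r * z t) = z t - lincomb a' cs t"
              using r by (simp add: field_simps)
          qed
          ultimately have "eqv B z (lincomb a' cs)" by (simp add: eqv_def)
          thus False using z(2)[of a'] by (simp add: a'_def)
        qed
        hence "lincomb a cs \<in> B" using sum by simp
        hence "\<forall>j<length cs. a ! j = 0" using cs(1) la unfolding L_def indepm_def by blast
        thus "g ! i = 0" using g(3) r0 la unfolding gar by (auto simp: nth_append less_Suc_eq)
      qed
    qed
    hence "length (cs @ [z]) \<le> N" by (rule maxi)
    thus False using cs by simp
  qed
  hence "quot_basis Z B cs" using cs quot_basis_iff[OF sB sZ] unfolding L_def by blast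
  thus ?thesis by blast
qed



definition alt :: "('a list \<Rightarrow> rat) \<Rightarrow> bool" where
  "alt c \<longleftrightarrow> (\<forall>xs p. p permutes {..<length xs} \<longrightarrow> c (permute_list p xs) = of_int (sign p) * c xs)"

lemma altD: "alt c \<Longrightarrow> p permutes {..<length xs} \<Longrightarrow> c (permute_list p xs) = of_int (sign p) * c xs"
  by (simp add: alt_def)

primrec idx :: "'a \<Rightarrow> 'a list \<Rightarrow> nat" where
  "idx a [] = 0"
| "idx a (x # xs) = (if x = a then 0 else Suc (idx a xs))"

lemma lift_perm:
  assumes p: "p permutes {..<n}"
  obtains p' where "p' permutes {..<Suc n}" "sign p' = sign p" "p' 0 = 0" "\<And>i. p' (Suc i) = Suc (p i)"
proof -
  define p' where "p' = map_permutation {..<n} Suc p"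
  have inj: "inj_on Suc {..<n}" by simp
  have bij: "bij_betw Suc {..<n} (Suc ` {..<n})" by (simp add: bij_betw_imageI)
  have "p' permutes (Suc ` {..<n})" unfolding p'_def by (rule map_permutation_permutes[OF bij p])
  hence 1: "p' permutes {..<Suc n}" by (rule permutes_subset) auto
  have 2: "sign p' = sign p" unfolding p'_def by (rule sign_map_permutation[OF inj p]) simp
  have 3: "p' 0 = 0" unfolding p'_def map_permutation_def restrict_id_def by auto
  have 4: "p' (Suc i) = Suc (p i)" for i
  proof (cases "i < n")
    case True
    have "inv_into {..<n} Suc (Suc i) = i" using True by (intro inv_into_f_eq) auto
    thus ?thesis using True unfolding p'_def map_permutation_def restrict_id_def by auto
  next
    case False
    hence "p i = i" using p by (intro permutes_not_in) auto
    thus ?thesis using False unfolding p'_def map_permutation_def restrict_id_def by auto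
  qed
  show ?thesis using that 1 2 3 4 by blast
qed

lemma permute_list_cons:
  assumes "p' 0 = 0" "\<And>i. p' (Suc i) = Suc (p i)"
  shows "permute_list p' (x # u) = x # permute_list p u"
  unfolding permute_list_def using assms
  by (simp add: upt_conv_Cons map_Suc_upt[symmetric] del: upt_Suc)

lemma alt_cons: assumes "alt c" shows "alt (\<lambda>u. c (x # u))"
  unfolding alt_def
proof (intro allI impI)
  fix u :: "'a list" and p assume p: "p permutes {..<length u}"
  obtain p' where p': "p' permutes {..<Suc (length u)}" "sign p' = sign p" "p' 0 = 0" "\<And>i. p' (Suc i) = Suc (p i)"
    using lift_perm[OF p] by blast
  have "c (x # permute_list p u) = c (permute_list p' (x # u))"
    using permute_list_cons[of p' p x u] p' by simp
  also have "\<dots> = of_int (sign p') * c (x # u)" using altD[OF assms, of p' "x # u"] p' by simp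
  finally show "c (x # permute_list p u) = of_int (sign p) * c (x # u)" using p' by simp
qed

lemma swap01: assumes "alt c" shows "c (y # x # r) = - c (x # y # r)"
proof -
  have t: "transpose 0 1 permutes {..<length (x # y # r)}" by (intro permutes_swap_id) auto
  have "permute_list (transpose 0 1) (x # y # r) = y # x # r"
  proof (rule nth_equalityI)
    fix i assume "i < length (permute_list (transpose 0 1) (x # y # r))"
    hence i: "i < length (x # y # r)" by simp
    show "permute_list (transpose 0 1) (x # y # r) ! i = (y # x # r) ! i"
      using permute_list_nth[OF t i] by (cases i; cases "i - 1") (auto simp: Transposition.transpose_def)
  qed simp
  hence "c (y # x # r) = of_int (sign (transpose (0::nat) 1)) * c (x # y # r)"
    using altD[OF assms t] by simp
  thus ?thesis by (simp add: sign_swap_id)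
qed

lemma move_front:
  assumes "alt c" "a \<in> set u"
  shows "c (a # remove1 a u) = (-1) ^ idx a u * c u"
  using assms
proof (induction u arbitrary: c)
  case Nil thus ?case by simp
next
  case (Cons x u)
  show ?case
  proof (cases "x = a")
    case True thus ?thesis by simp
  next
    case False
    hence au: "a \<in> set u" using Cons.prems by simp
    have "c (a # remove1 a (x # u)) = c (a # x # remove1 a u)" using False by simp
    also have "\<dots> = - c (x # a # remove1 a u)" by (rule swap01[OF Cons.prems(1)])
    also have "c (x # a # remove1 a u) = (-1) ^ idx a u * c (x # u)"
      using Cons.IH[OF alt_cons[OF Cons.prems(1)] au] .
    finally show ?thesis using False by simp
  qed
qed

lemma idx_less: "a \<in> set u \<Longrightarrow> idx a u < length u"
  by (induction u) auto

lemma nth_idx: "a \<in> set u \<Longrightarrow> u ! idx a u = a"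
  by (induction u) auto

lemma idx_nth: "distinct u \<Longrightarrow> i < length u \<Longrightarrow> idx (u ! i) u = i"
proof (induction u arbitrary: i)
  case Nil thus ?case by simp
next
  case (Cons x u)
  show ?case
  proof (cases i)
    case 0 thus ?thesis by simp
  next
    case (Suc j)
    hence "u ! j \<noteq> x" using Cons.prems by (auto simp: nth_mem)
    thus ?thesis using Cons Suc by simp
  qed
qed

lemma take_remove1_idx:
  "a \<in> set u \<Longrightarrow> take (idx a u) (remove1 a u) @ a # drop (idx a u) (remove1 a u) = u"
  by (induction u) auto

lemma idx_ins:
  assumes "a \<notin> set (take j xs)" "j \<le> length xs"
  shows "idx a (take j xs @ a # drop j xs) = j" "remove1 a (take j xs @ a # drop j xs) = xs"
  using assms
proof (induction xs arbitrary: j)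
  case Nil
  { case 1 thus ?case by simp }
  { case 2 thus ?case by simp }
next
  case (Cons x xs)
  { case 1 thus ?case using Cons by (cases j) auto }
  { case 2 thus ?case using Cons by (cases j) auto }
qed

definition rs :: "'a list \<Rightarrow> 'a list \<Rightarrow> rat" where
  "rs u w = (if \<exists>p. p permutes {..<length u} \<and> w = permute_list p u
     then of_int (sign (THE p. p permutes {..<length u} \<and> w = permute_list p u)) else 0)"

lemma perm_unique:
  assumes "distinct u" "p permutes {..<length u}" "q permutes {..<length u}"
    "permute_list p u = permute_list q u"
  shows "p = q"
proof
  fix i
  show "p i = q i"
  proof (cases "i < length u")
    case True
    have "permute_list p u ! i = permute_list q u ! i" using assms(4) by simp
    hence "u ! p i = u ! q i" using permute_list_nth[OF assms(2) True] permute_list_nth[OF assms(3) True] by simp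
    moreover have "p i < length u" using permutes_in_image[OF assms(2), of i] True by simp
    moreover have "q i < length u" using permutes_in_image[OF assms(3), of i] True by simp
    ultimately show ?thesis using assms(1) nth_eq_iff_index_eq by blast
  next
    case False
    thus ?thesis using assms(2,3) by (simp add: permutes_not_in)
  qed
qed

lemma rs_perm:
  assumes "distinct u" "p permutes {..<length u}"
  shows "rs u (permute_list p u) = of_int (sign p)"
proof -
  have "(THE q. q permutes {..<length u} \<and> permute_list p u = permute_list q u) = p"
    by (rule the_equality) (use assms perm_unique in auto)
  thus ?thesis unfolding rs_def using assms by auto
qed

lemma permute_list_inv:
  assumes "p permutes {..<length w}"
  shows "permute_list (inv p) (permute_list p w) = w"
proof -
  have "inv p permutes {..<length w}" using permutes_inv[OF assms] .
  hence "permute_list (p \<circ> inv p) w = permute_list (inv p) (permute_list p w)"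
    by (rule permute_list_compose)
  moreover have "p \<circ> inv p = id" using permutes_inv_o(1)[OF assms] .
  ultimately show ?thesis by simp
qed

lemma alt_rs:
  assumes du: "distinct u"
  shows "alt (rs u)"
  unfolding alt_def
proof (intro allI impI)
  fix w :: "'a list" and q assume q: "q permutes {..<length w}"
  show "rs u (permute_list q w) = of_int (sign q) * rs u w"
  proof (cases "\<exists>p. p permutes {..<length u} \<and> w = permute_list p u")
    case True
    then obtain p where p: "p permutes {..<length u}" "w = permute_list p u" by blast
    have lw: "length w = length u" using p by simp
    have q': "q permutes {..<length u}" using q lw by simp
    have "permute_list q w = permute_list (p \<circ> q) u"
      using permute_list_compose[of q u p] q' p by simp
    moreover have "(p \<circ> q) permutes {..<length u}" by (rule permutes_compose[OF q' p(1)])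
    ultimately have "rs u (permute_list q w) = of_int (sign (p \<circ> q))" using rs_perm[OF du] by simp
    also have "sign (p \<circ> q) = sign p * sign q"
      by (rule sign_compose) (use p(1) q' in \<open>auto intro: permutes_imp_permutation\<close>)
    finally show ?thesis using rs_perm[OF du p(1)] p(2) by simp
  next
    case False
    have "\<not> (\<exists>p. p permutes {..<length u} \<and> permute_list q w = permute_list p u)"
    proof
      assume "\<exists>p. p permutes {..<length u} \<and> permute_list q w = permute_list p u"
      then obtain p where p: "p permutes {..<length u}" "permute_list q w = permute_list p u" by blast
      have lw: "length w = length u" using p(2) by (metis length_permute_list)
      have iq: "inv q permutes {..<length u}" using permutes_inv[OF q] lw by simp
      have "w = permute_list (inv q) (permute_list p u)" using permute_list_inv[OF q] p(2) by simp
      also have "\<dots> = permute_list (p \<circ> inv q) u" using permute_list_compose[of "inv q" u p] iq by simp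
      finally have "w = permute_list (p \<circ> inv q) u" .
      moreover have "(p \<circ> inv q) permutes {..<length u}" by (rule permutes_compose[OF iq p(1)])
      ultimately show False using False by blast
    qed
    thus ?thesis using False unfolding rs_def by simp
  qed
qed

lemma rs_self: "distinct u \<Longrightarrow> rs u u = 1"
  using rs_perm[of u id] by (simp add: permutes_id)

lemma rs_nz:
  assumes "rs u w \<noteq> 0" "distinct u"
  shows "length w = length u" "set w = set u" "distinct w"
proof -
  obtain p where p: "p permutes {..<length u}" "w = permute_list p u"
    using assms(1) unfolding rs_def by (auto split: if_splits)
  thus "length w = length u" "set w = set u" "distinct w" using assms(2) by auto
qed

lemma cone_sign:
  assumes f: "alt f" and du: "distinct u" and a: "a \<in> set u" and q: "q permutes {..<length u}"
  shows "(-1) ^ idx a (permute_list q u) * f (remove1 a (permute_list q u))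
       = of_int (sign q) * ((-1) ^ idx a u * f (remove1 a u))"
proof -
  define u' where "u' = permute_list q u"
  define r where "r = remove1 a u"
  define r' where "r' = remove1 a u'"
  have mu: "mset u' = mset u" unfolding u'_def using q by simp
  have a': "a \<in> set u'" using a mu by (metis set_mset_mset)
  have "mset r' = mset r" unfolding r'_def r_def using mu by simp
  then obtain p where p: "p permutes {..<length r}" "permute_list p r = r'"
    using mset_eq_permutation by metis
  have fr: "f r' = of_int (sign p) * f r" using altD[OF f p(1)] p(2) by simp
  let ?A = "rs u"
  have A: "alt ?A" using alt_rs[OF du] .
  have e1: "?A (a # r') = (-1) ^ idx a u' * of_int (sign q)"
    using move_front[OF A a'] rs_perm[OF du q] unfolding r'_def u'_def by simp
  have "?A (a # r') = of_int (sign p) * ?A (a # r)"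
    using altD[OF alt_cons[OF A] p(1)] p(2) by simp
  also have "?A (a # r) = (-1) ^ idx a u" using move_front[OF A a] rs_self[OF du] unfolding r_def by simp
  finally have e2: "(-1::rat) ^ idx a u' * of_int (sign q) = of_int (sign p) * (-1) ^ idx a u" using e1 by simp
  define x where "x = ((-1)::rat) ^ idx a u'"
  define y where "y = ((-1)::rat) ^ idx a u"
  define s where "s = (of_int (sign q) :: rat)"
  define t where "t = (of_int (sign p) :: rat)"
  have xx: "x * x = 1" unfolding x_def by (simp add: power_mult_distrib[symmetric])
  have yy: "y * y = 1" unfolding y_def by (simp add: power_mult_distrib[symmetric])
  have st: "x * s = t * y" using e2 unfolding x_def y_def s_def t_def by simp
  have "x * t = x * t * (y * y)" using yy by simp
  also have "\<dots> = x * (t * y) * y" by (simp add: mult.assoc)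
  also have "\<dots> = x * (x * s) * y" using st by simp
  also have "\<dots> = (x * x) * s * y" by (simp add: mult.assoc)
  also have "\<dots> = s * y" using xx by simp
  finally have xt: "x * t = s * y" .
  have "(-1) ^ idx a u' * f r' = x * t * f r" unfolding x_def t_def fr by simp
  also have "\<dots> = s * (y * f r)" using xt by simp
  finally show ?thesis unfolding s_def y_def u'_def r'_def r_def .
qed



definition simp0 :: "'a set \<Rightarrow> ('a \<Rightarrow> 'a \<Rightarrow> bool) \<Rightarrow> 'a list \<Rightarrow> bool" where
  "simp0 X adj ys \<longleftrightarrow> distinct ys \<and> set ys \<subseteq> X \<and> (\<forall>x\<in>set ys. \<forall>y\<in>set ys. x \<noteq> y \<longrightarrow> adj x y)"

definition pre :: "'a set \<Rightarrow> ('a \<Rightarrow> 'a) \<Rightarrow> 'a list \<Rightarrow> 'a list set" where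
  "pre X k ys = {xs. set xs \<subseteq> X \<and> map k xs = ys}"

definition push :: "'a set \<Rightarrow> ('a \<Rightarrow> 'a \<Rightarrow> bool) \<Rightarrow> ('a \<Rightarrow> 'a) \<Rightarrow> ('a list \<Rightarrow> rat) \<Rightarrow> 'a list \<Rightarrow> rat" where
  "push X adj k c ys = (if simp0 X adj ys then (\<Sum>xs\<in>pre X k ys. c xs) else 0)"

definition bd :: "'a set \<Rightarrow> ('a list \<Rightarrow> rat) \<Rightarrow> 'a list \<Rightarrow> rat" where
  "bd X c ys = (\<Sum>v\<in>X. c (v # ys))"

definition supp :: "'a set \<Rightarrow> ('a \<Rightarrow> 'a \<Rightarrow> bool) \<Rightarrow> ('a list \<Rightarrow> rat) \<Rightarrow> bool" where
  "supp X adj c \<longleftrightarrow> (\<forall>xs. c xs \<noteq> 0 \<longrightarrow> simp0 X adj xs)"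

lemma simp0_Nil[simp]: "simp0 X adj []" by (simp add: simp0_def)

lemma simp0_Cons: "simp0 X adj (v # ys) \<Longrightarrow> simp0 X adj ys"
  by (auto simp: simp0_def)

lemma ordered_simplex_simp0: "ordered_simplex X adj ys \<longleftrightarrow> ys \<noteq> [] \<and> simp0 X adj ys"
  by (auto simp: ordered_simplex_def simp0_def)

lemma simp0_perm: "p permutes {..<length ys} \<Longrightarrow> simp0 X adj (permute_list p ys) \<longleftrightarrow> simp0 X adj ys"
  by (simp add: simp0_def)

lemma finite_pre: "finite X \<Longrightarrow> finite (pre X k ys)"
  by (rule finite_subset[OF _ finite_lists_length_eq[of X "length ys"]]) (auto simp: pre_def)

lemma pre_Nil: "pre X k [] = {[]}"
  by (auto simp: pre_def)

lemma chain_map_push: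
  assumes "c [] = 0"
  shows "chain_map X adj k c = push X adj k c"
proof
  fix ys show "chain_map X adj k c ys = push X adj k c ys"
  proof (cases "ys = []")
    case True thus ?thesis using assms by (simp add: chain_map_def push_def pre_Nil ordered_simplex_def)
  next
    case False thus ?thesis by (simp add: chain_map_def push_def pre_def ordered_simplex_simp0)
  qed
qed

lemma boundary_bd:
  assumes "supp X adj c"
  shows "boundary X adj c = (\<lambda>ys. if ys = [] then 0 else bd X c ys)"
proof
  fix ys
  show "boundary X adj c ys = (if ys = [] then 0 else bd X c ys)"
  proof (cases "simp0 X adj ys")
    case True thus ?thesis by (simp add: boundary_def bd_def ordered_simplex_simp0)
  next
    case False
    have "c (v # ys) = 0" for v
    proof (rule ccontr)
      assume "c (v # ys) \<noteq> 0"
      hence "simp0 X adj (v # ys)" using assms by (simp add: supp_def)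
      from simp0_Cons[OF this] False show False by contradiction
    qed
    thus ?thesis using False by (simp add: boundary_def bd_def ordered_simplex_simp0)
  qed
qed

lemma chains_iff: "c \<in> chains X adj q \<longleftrightarrow> (\<forall>xs. c xs \<noteq> 0 \<longrightarrow> ordered_simplex X adj xs \<and> length xs = Suc q) \<and> alt c"
  by (simp add: chains_def alt_def)

lemma permute_list_inv2:
  assumes "p permutes {..<length w}"
  shows "permute_list p (permute_list (inv p) w) = w"
proof -
  have "permute_list (inv p \<circ> p) w = permute_list p (permute_list (inv p) w)"
    by (rule permute_list_compose[OF assms])
  moreover have "inv p \<circ> p = id" using permutes_inv_o(2)[OF assms] .
  ultimately show ?thesis by simp
qed

lemma push_alt:
  assumes "alt c" "finite X"
  shows "alt (push X adj k c)"
  unfolding alt_def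
proof (intro allI impI)
  fix ys :: "'a list" and p assume p: "p permutes {..<length ys}"
  have pl: "p permutes {..<length xs}" if "xs \<in> pre X k ys" for xs using p that by (auto simp: pre_def)
  have img: "pre X k (permute_list p ys) = permute_list p ` pre X k ys"
  proof
    show "permute_list p ` pre X k ys \<subseteq> pre X k (permute_list p ys)"
    proof
      fix xs' assume "xs' \<in> permute_list p ` pre X k ys"
      then obtain xs where xs: "xs \<in> pre X k ys" "xs' = permute_list p xs" by blast
      have "map k (permute_list p xs) = permute_list p (map k xs)" using permute_list_map[OF pl[OF xs(1)], of k] by simp
      thus "xs' \<in> pre X k (permute_list p ys)" using xs pl[OF xs(1)] by (auto simp: pre_def)
    qed
  next
    show "pre X k (permute_list p ys) \<subseteq> permute_list p ` pre X k ys"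
    proof
      fix xs' assume xs': "xs' \<in> pre X k (permute_list p ys)"
      have "map k xs' = permute_list p ys" using xs' by (simp add: pre_def)
      hence "length (map k xs') = length (permute_list p ys)" by simp
      hence l: "length xs' = length ys" by simp
      have ip: "inv p permutes {..<length xs'}" using permutes_inv[OF p] l by simp
      define xs where "xs = permute_list (inv p) xs'"
      have "map k xs = permute_list (inv p) (map k xs')" unfolding xs_def using permute_list_map[OF ip, of k] by simp
      also have "\<dots> = ys" using xs' permute_list_inv[OF p] by (simp add: pre_def)
      finally have "xs \<in> pre X k ys" using xs' ip unfolding xs_def by (auto simp: pre_def)
      moreover have "xs' = permute_list p xs" unfolding xs_def using permute_list_inv2[of p xs'] p l by simp
      ultimately show "xs' \<in> permute_list p ` pre X k ys" by blast
    qed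
  qed
  have inj: "inj_on (permute_list p) (pre X k ys)"
  proof
    fix x y assume "x \<in> pre X k ys" "y \<in> pre X k ys" "permute_list p x = permute_list p y"
    hence "permute_list (inv p) (permute_list p x) = permute_list (inv p) (permute_list p y)" by simp
    thus "x = y" using permute_list_inv[OF pl[OF \<open>x \<in> _\<close>]] permute_list_inv[OF pl[OF \<open>y \<in> _\<close>]] by simp
  qed
  have "(\<Sum>xs\<in>pre X k (permute_list p ys). c xs) = (\<Sum>xs\<in>pre X k ys. c (permute_list p xs))"
    unfolding img by (rule sum.reindex[OF inj, unfolded o_def])
  also have "\<dots> = (\<Sum>xs\<in>pre X k ys. of_int (sign p) * c xs)"
    by (rule sum.cong) (auto intro: altD[OF assms(1)] pl)
  finally show "push X adj k c (permute_list p ys) = of_int (sign p) * push X adj k c ys"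
    unfolding push_def using simp0_perm[OF p] by (simp add: sum_distrib_left)
qed

lemma sum_involution_zero:
  assumes "finite S" "\<And>x. x \<in> S \<Longrightarrow> \<phi> x \<in> S" "\<And>x. x \<in> S \<Longrightarrow> \<phi> (\<phi> x) = x"
    "\<And>x. x \<in> S \<Longrightarrow> F (\<phi> x) = - F x"
  shows "sum F S = (0::rat)"
proof -
  have bij: "bij_betw \<phi> S S"
    by (rule bij_betwI[of _ _ _ \<phi>]) (use assms in auto)
  have "sum F S = sum (F \<circ> \<phi>) S" using sum.reindex_bij_betw[OF bij, of F] by simp
  also have "\<dots> = - sum F S" using assms(4) by (simp add: sum_negf)
  finally show ?thesis by simp
qed

lemma swap_gen:
  assumes "alt c" "i < length l" "j < length l" "i \<noteq> j"
  shows "c (l[i := l ! j, j := l ! i]) = - c l"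
proof -
  have t: "transpose i j permutes {..<length l}" using assms by (intro permutes_swap_id) auto
  have "permute_list (transpose i j) l = l[i := l ! j, j := l ! i]"
  proof (rule nth_equalityI)
    fix m assume "m < length (permute_list (transpose i j) l)"
    hence m: "m < length l" by simp
    show "permute_list (transpose i j) l ! m = l[i := l ! j, j := l ! i] ! m"
      using permute_list_nth[OF t m] assms m by (auto simp: Transposition.transpose_def nth_list_update)
  qed simp
  hence "c (l[i := l ! j, j := l ! i]) = of_int (sign (transpose i j)) * c l" using altD[OF assms(1) t] by simp
  thus ?thesis using assms(4) by (simp add: sign_swap_id)
qed

lemma sum_pre_cons:
  assumes "finite X"
  shows "(\<Sum>xs\<in>pre X k (v # ys). F xs) = (\<Sum>x\<in>X. if k x = v then (\<Sum>xs\<in>pre X k ys. F (x # xs)) else 0)"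
proof -
  have img: "pre X k (v # ys) = (\<lambda>(x, xs). x # xs) ` ({x \<in> X. k x = v} \<times> pre X k ys)"
  proof
    show "pre X k (v # ys) \<subseteq> (\<lambda>(x, xs). x # xs) ` ({x \<in> X. k x = v} \<times> pre X k ys)"
    proof
      fix l assume "l \<in> pre X k (v # ys)"
      then obtain x xs where h: "l = x # xs" "x \<in> X" "k x = v" "xs \<in> pre X k ys"
        by (cases l) (auto simp: pre_def)
      show "l \<in> (\<lambda>(x, xs). x # xs) ` ({x \<in> X. k x = v} \<times> pre X k ys)"
        by (rule image_eqI[of _ _ "(x, xs)"]) (use h in auto)
    qed
  qed (auto simp: pre_def)
  have inj: "inj_on (\<lambda>(x, xs). x # xs) ({x \<in> X. k x = v} \<times> pre X k ys)"
    by (auto simp: inj_on_def)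
  have "(\<Sum>xs\<in>pre X k (v # ys). F xs) = (\<Sum>(x, xs)\<in>{x \<in> X. k x = v} \<times> pre X k ys. F (x # xs))"
    unfolding img by (subst sum.reindex[OF inj]) (simp add: case_prod_unfold)
  also have "\<dots> = (\<Sum>x\<in>{x \<in> X. k x = v}. \<Sum>xs\<in>pre X k ys. F (x # xs))"
    by (rule sum.cartesian_product[symmetric])
  also have "\<dots> = (\<Sum>x\<in>X. if k x = v then (\<Sum>xs\<in>pre X k ys. F (x # xs)) else 0)"
    using assms by (simp add: sum.inter_filter)
  finally show ?thesis .
qed


lemma bd_push:
  assumes fin: "finite X" and kX: "\<And>x. x \<in> X \<Longrightarrow> k x \<in> X"
    and kc: "\<And>x y. x \<in> X \<Longrightarrow> y \<in> X \<Longrightarrow> adj x y \<Longrightarrow> adj_eq adj (k x) (k y)"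
    and ac: "alt c" and sc: "supp X adj c"
  shows "bd X (push X adj k c) ys = push X adj k (bd X c) ys"
proof (cases "simp0 X adj ys")
  case False
  have "push X adj k c (v # ys) = 0" for v
    using False simp0_Cons[of X adj v ys] by (auto simp: push_def)
  thus ?thesis using False by (simp add: bd_def push_def)
next
  case True
  define G where "G x = (\<Sum>xs\<in>pre X k ys. c (x # xs))" for x
  have fp: "finite (pre X k ys)" using finite_pre[OF fin] .
  have "bd X (push X adj k c) ys = (\<Sum>v\<in>X. if simp0 X adj (v # ys) then (\<Sum>x\<in>X. if k x = v then G x else 0) else 0)"
    unfolding bd_def push_def G_def
  proof (intro sum.cong refl)
    fix v assume "v \<in> X"
    show "(if simp0 X adj (v # ys) then \<Sum>xs\<in>pre X k (v # ys). c xs else 0) =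
      (if simp0 X adj (v # ys) then \<Sum>x\<in>X. if k x = v then \<Sum>xs\<in>pre X k ys. c (x # xs) else 0 else 0)"
      using sum_pre_cons[OF fin, where F=c and k=k and v=v and ys=ys] by simp
  qed
  also have "\<dots> = (\<Sum>v\<in>X. \<Sum>x\<in>X. if v = k x then (if simp0 X adj (k x # ys) then G x else 0) else 0)"
  proof (intro sum.cong refl)
    fix v assume "v \<in> X"
    show "(if simp0 X adj (v # ys) then \<Sum>x\<in>X. if k x = v then G x else 0 else 0) =
      (\<Sum>x\<in>X. if v = k x then if simp0 X adj (k x # ys) then G x else 0 else 0)"
      by (cases "simp0 X adj (v # ys)") (auto intro!: sum.cong sum.neutral)
  qed
  also have "\<dots> = (\<Sum>x\<in>X. \<Sum>v\<in>X. if v = k x then (if simp0 X adj (k x # ys) then G x else 0) else 0)"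
    by (rule sum.swap)
  also have "\<dots> = (\<Sum>x\<in>X. if simp0 X adj (k x # ys) then G x else 0)"
    using fin kX by (intro sum.cong refl) (simp add: sum.delta)
  finally have L: "bd X (push X adj k c) ys = (\<Sum>x\<in>X. if simp0 X adj (k x # ys) then G x else 0)" .
  have R: "push X adj k (bd X c) ys = (\<Sum>x\<in>X. G x)"
    unfolding push_def bd_def G_def using True by (simp add: sum.swap[of _ X])
  have G0: "G x = 0" if x: "x \<in> X" "k x \<notin> set ys" "\<not> simp0 X adj (k x # ys)" for x
    unfolding G_def
  proof (rule sum.neutral, rule ballI, rule ccontr)
    fix xs assume xs: "xs \<in> pre X k ys" "c (x # xs) \<noteq> 0"
    have sx: "simp0 X adj (x # xs)" using sc xs(2) by (simp add: supp_def)
    have ys: "ys = map k xs" using xs(1) by (simp add: pre_def)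
    have "simp0 X adj (k x # ys)"
      unfolding simp0_def
    proof (intro conjI ballI impI)
      show "distinct (k x # ys)" using True x(2) by (simp add: simp0_def)
      show "set (k x # ys) \<subseteq> X" using True kX x(1) by (simp add: simp0_def)
    next
      fix a b assume ab: "a \<in> set (k x # ys)" "b \<in> set (k x # ys)" "a \<noteq> b"
      have adjys: "\<forall>a\<in>set ys. \<forall>b\<in>set ys. a \<noteq> b \<longrightarrow> adj a b" using True by (simp add: simp0_def)
      have xs_adj: "adj x y \<and> adj y x" if "y \<in> set xs" for y
        using sx that by (auto simp: simp0_def)
      have xsX: "set (x # xs) \<subseteq> X" using sx by (simp add: simp0_def)
      show "adj a b"
      proof (cases "a = k x")
        case True
        hence "b \<in> set ys" using ab by auto
        then obtain y where y: "y \<in> set xs" "b = k y" using ys by auto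
        have "adj_eq adj (k x) (k y)" using kc[of x y] xs_adj[OF y(1)] xsX y(1) by auto
        thus ?thesis using True y ab by (auto simp: adj_eq_def)
      next
        case False
        hence a: "a \<in> set ys" using ab by auto
        show ?thesis
        proof (cases "b = k x")
          case True
          obtain y where y: "y \<in> set xs" "a = k y" using ys a by auto
          have "adj_eq adj (k y) (k x)" using kc[of y x] xs_adj[OF y(1)] xsX y(1) by auto
          thus ?thesis using True y ab by (auto simp: adj_eq_def)
        next
          case False
          hence "b \<in> set ys" using ab by auto
          thus ?thesis using adjys a ab by blast
        qed
      qed
    qed
    thus False using x(3) by contradiction
  qed
  have dup: "\<not> simp0 X adj (k x # ys)" if "k x \<in> set ys" for x using that by (simp add: simp0_def)
  have "(\<Sum>x\<in>X. G x) - (\<Sum>x\<in>X. if simp0 X adj (k x # ys) then G x else 0)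
      = (\<Sum>x\<in>X. if k x \<in> set ys then G x else 0)"
    unfolding sum_subtractf[symmetric] using G0 dup by (intro sum.cong refl) auto
  also have "\<dots> = (\<Sum>x\<in>{x \<in> X. k x \<in> set ys}. G x)"
    using fin by (simp add: sum.inter_filter)
  also have "\<dots> = (\<Sum>(x, xs)\<in>{x \<in> X. k x \<in> set ys} \<times> pre X k ys. c (x # xs))"
    unfolding G_def by (rule sum.cartesian_product)
  also have "\<dots> = (\<Sum>l\<in>(\<lambda>(x, xs). x # xs) ` ({x \<in> X. k x \<in> set ys} \<times> pre X k ys). c l)"
    by (subst sum.reindex) (auto simp: inj_on_def case_prod_unfold)
  also have "\<dots> = 0"
  proof -
    let ?S = "(\<lambda>(x, xs). x # xs) ` ({x \<in> X. k x \<in> set ys} \<times> pre X k ys)"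
    define phi where "phi l = (case l of [] \<Rightarrow> [] | x # xs \<Rightarrow> xs ! idx (k x) ys # xs[idx (k x) ys := x])" for l
    have phi_cons: "phi (y # zs) = zs ! idx (k y) ys # zs[idx (k y) ys := y]" for y zs by (simp add: phi_def)
    have dys: "distinct ys" using True by (simp add: simp0_def)
    have mem: "l \<in> ?S \<longleftrightarrow> (\<exists>x xs. l = x # xs \<and> x \<in> X \<and> k x \<in> set ys \<and> set xs \<subseteq> X \<and> map k xs = ys)" for l
      by (auto simp: pre_def)
    show ?thesis
    proof (rule sum_involution_zero[where \<phi> = phi])
      show "finite ?S" using fin fp by auto
      fix l assume l: "l \<in> ?S"
      then obtain x xs where h: "l = x # xs" "x \<in> X" "k x \<in> set ys" "set xs \<subseteq> X" "map k xs = ys"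
        using mem by blast
      define j where "j = idx (k x) ys"
      have jl: "j < length xs" using idx_less[OF h(3)] h(5) unfolding j_def by auto
      have ysj: "ys ! j = k x" using nth_idx[OF h(3)] unfolding j_def .
      have kxsj: "k (xs ! j) = k x" using ysj h(5) jl by auto
      have phil: "phi l = xs ! j # xs[j := x]" by (simp add: phi_cons j_def h(1))
      show "phi l \<in> ?S"
        unfolding mem phil
      proof (intro exI conjI)
        show "xs ! j \<in> X" using h(4) jl by auto
        show "k (xs ! j) \<in> set ys" using kxsj h(3) by simp
        show "set (xs[j := x]) \<subseteq> X" using h(2,4) set_update_subset_insert by fastforce
        have "ys[j := k x] = ys" using list_update_id[of ys j] ysj by simp
        thus "map k (xs[j := x]) = ys" using h(5) by (simp add: map_update)
      qed simp
      have jj: "idx (k (xs ! j)) ys = j" using kxsj j_def by simp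
      show "phi (phi l) = l" unfolding phil phi_cons jj using jl h(1) by simp
      have "l[0 := l ! Suc j, Suc j := l ! 0] = xs ! j # xs[j := x]" using h(1) by simp
      hence "phi l = l[0 := l ! Suc j, Suc j := l ! 0]" using phil by simp
      thus "c (phi l) = - c l" using swap_gen[OF ac, of 0 l "Suc j"] jl h(1) by simp
    qed
  qed
  finally have "(\<Sum>x\<in>X. G x) = (\<Sum>x\<in>X. if simp0 X adj (k x # ys) then G x else 0)" by simp
  thus ?thesis using L R by simp
qed



definition cone :: "'a set \<Rightarrow> ('a \<Rightarrow> 'a \<Rightarrow> bool) \<Rightarrow> 'a \<Rightarrow> ('a list \<Rightarrow> rat) \<Rightarrow> 'a list \<Rightarrow> rat" where
  "cone X adj a f u = (if simp0 X adj u \<and> a \<in> set u then (-1) ^ idx a u * f (remove1 a u) else 0)"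

definition compat :: "'a set \<Rightarrow> ('a \<Rightarrow> 'a \<Rightarrow> bool) \<Rightarrow> 'a \<Rightarrow> ('a list \<Rightarrow> rat) \<Rightarrow> bool" where
  "compat X adj a f \<longleftrightarrow> a \<in> X \<and> (\<forall>ys. f ys \<noteq> 0 \<longrightarrow> simp0 X adj ys \<and>
      (a \<notin> set ys \<longrightarrow> (\<forall>y\<in>set ys. adj a y \<and> adj y a)))"

lemma cone_alt:
  assumes "alt f" shows "alt (cone X adj a f)"
  unfolding alt_def
proof (intro allI impI)
  fix u :: "'a list" and q assume q: "q permutes {..<length u}"
  show "cone X adj a f (permute_list q u) = of_int (sign q) * cone X adj a f u"
  proof (cases "simp0 X adj u \<and> a \<in> set u")
    case True
    hence du: "distinct u" by (simp add: simp0_def)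
    have "simp0 X adj (permute_list q u) \<and> a \<in> set (permute_list q u)" using True q simp0_perm by auto
    thus ?thesis using True cone_sign[OF assms du _ q, of a] unfolding cone_def by simp
  next
    case False
    hence neg: "\<not> (simp0 X adj (permute_list q u) \<and> a \<in> set (permute_list q u))" using q simp0_perm by auto
    show ?thesis unfolding cone_def by (subst if_not_P[OF neg], subst if_not_P[OF False]) simp
  qed
qed

lemma cone_supp: "supp X adj (cone X adj a f)"
  unfolding supp_def cone_def by auto

lemma simp0_remove1:
  assumes "simp0 X adj u" shows "simp0 X adj (remove1 a u)"
proof -
  have s: "set (remove1 a u) \<subseteq> set u" by (rule set_remove1_subset)
  show ?thesis using assms s unfolding simp0_def by (simp add: distinct_remove1) blast
qed

lemma simp0_cons_intro:
  "simp0 X adj ys \<Longrightarrow> a \<in> X \<Longrightarrow> a \<notin> set ys \<Longrightarrow> (\<forall>y\<in>set ys. adj a y \<and> adj y a) \<Longrightarrow> simp0 X adj (a # ys)"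
  unfolding simp0_def by auto

lemma cone_cons_notin:
  "a \<notin> set ys \<Longrightarrow> cone X adj a f (v # ys) = (if v = a then (if simp0 X adj (a # ys) then f ys else 0) else 0)"
  by (cases "v = a") (simp_all add: cone_def)

lemma cone_cons_in:
  assumes "a \<in> set ys"
  shows "cone X adj a f (v # ys) = (if v \<noteq> a \<and> simp0 X adj (v # ys) then - ((-1) ^ idx a ys) * f (v # remove1 a ys) else 0)"
proof (cases "v = a")
  case True
  hence "\<not> simp0 X adj (v # ys)" using assms by (simp add: simp0_def)
  thus ?thesis using True by (simp add: cone_def)
next
  case False thus ?thesis using assms by (simp add: cone_def)
qed

lemma bd_cone:
  assumes fin: "finite X" and af: "alt f" and cp: "compat X adj a f"
  shows "bd X (cone X adj a f) ys = f ys - cone X adj a (bd X f) ys"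
proof -
  have aX: "a \<in> X" using cp by (simp add: compat_def)
  have fsupp: "f u \<noteq> 0 \<Longrightarrow> simp0 X adj u" for u using cp by (simp add: compat_def)
  show ?thesis
  proof (cases "simp0 X adj ys")
    case False
    have "cone X adj a f (v # ys) = 0" for v using False simp0_Cons[of X adj v ys] by (auto simp: cone_def)
    moreover have "f ys = 0" using False fsupp by blast
    ultimately show ?thesis using False by (simp add: bd_def cone_def)
  next
    case True
    show ?thesis
    proof (cases "a \<in> set ys")
      case False
      have "bd X (cone X adj a f) ys = (\<Sum>v\<in>X. if v = a then (if simp0 X adj (a # ys) then f ys else 0) else 0)"
        unfolding bd_def by (intro sum.cong refl) (rule cone_cons_notin[OF False])
      also have "\<dots> = (if simp0 X adj (a # ys) then f ys else 0)"
        using sum.delta[OF fin, of a "\<lambda>_. (if simp0 X adj (a # ys) then f ys else 0)"] aX by simp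
      also have "\<dots> = f ys"
      proof (cases "f ys = 0")
        case False
        hence "\<forall>y\<in>set ys. adj a y \<and> adj y a" using cp \<open>a \<notin> set ys\<close> unfolding compat_def by blast
        hence "simp0 X adj (a # ys)" by (intro simp0_cons_intro[OF True aX \<open>a \<notin> set ys\<close>])
        thus ?thesis by simp
      qed simp
      moreover have "cone X adj a (bd X f) ys = 0" using False by (simp add: cone_def)
      ultimately show ?thesis by simp
    next
      case aY: True
      define i where "i = idx a ys"
      define r where "r = remove1 a ys"
      have dys: "distinct ys" using True by (simp add: simp0_def)
      have setys: "set ys = insert a (set r)" using dys aY unfolding r_def by auto
      have anr: "a \<notin> set r" using dys unfolding r_def by simp
      have key: "simp0 X adj (v # ys)" if v: "v \<in> X" "v \<noteq> a" "f (v # r) \<noteq> 0" for v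
      proof -
        have s1: "simp0 X adj (v # r)" using fsupp v(3) .
        have "a \<notin> set (v # r)" using v(2) anr by simp
        hence adja: "\<forall>y\<in>set (v # r). adj a y \<and> adj y a" using cp v(3) unfolding compat_def by blast
        have vr: "v \<notin> set r" using s1 by (simp add: simp0_def)
        show ?thesis
          unfolding simp0_def
        proof (intro conjI ballI impI)
          show "distinct (v # ys)" using dys vr v(2) setys by simp
          show "set (v # ys) \<subseteq> X" using True v(1) by (simp add: simp0_def)
        next
          fix x y assume xy: "x \<in> set (v # ys)" "y \<in> set (v # ys)" "x \<noteq> y"
          have s1': "\<forall>x\<in>set (v # r). \<forall>y\<in>set (v # r). x \<noteq> y \<longrightarrow> adj x y" using s1 by (simp add: simp0_def)
          have sy: "\<forall>x\<in>set ys. \<forall>y\<in>set ys. x \<noteq> y \<longrightarrow> adj x y" using True by (simp add: simp0_def)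
          have hx: "x \<in> set (v # r) \<or> x = a" and hy: "y \<in> set (v # r) \<or> y = a" using xy setys by auto
          show "adj x y"
          proof (cases "x = a")
            case True
            hence "y \<in> set (v # r)" using hy xy(3) by blast
            thus ?thesis using adja True by blast
          next
            case xa: False
            hence x': "x \<in> set (v # r)" using hx by blast
            show ?thesis
            proof (cases "y = a")
              case True thus ?thesis using adja x' by blast
            next
              case False
              hence "y \<in> set (v # r)" using hy by blast
              thus ?thesis using s1' x' xy(3) by blast
            qed
          qed
        qed
      qed
      have c_a: "cone X adj a f (a # ys) = 0" using cone_cons_in[OF aY, of X adj f a] by simp
      have c_v: "cone X adj a f (v # ys) = - ((-1) ^ i) * f (v # r)" if "v \<in> X - {a}" for v
        using cone_cons_in[OF aY, of X adj f v] key[of v] that unfolding i_def r_def by auto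
      have L: "bd X (cone X adj a f) ys = - ((-1) ^ i) * (\<Sum>v\<in>X - {a}. f (v # r))"
      proof -
        have "bd X (cone X adj a f) ys = cone X adj a f (a # ys) + (\<Sum>v\<in>X - {a}. cone X adj a f (v # ys))"
          unfolding bd_def by (rule sum.remove[OF fin aX])
        also have "\<dots> = (\<Sum>v\<in>X - {a}. - ((-1) ^ i) * f (v # r))"
          using c_a c_v by simp
        finally show ?thesis by (simp add: sum_distrib_left)
      qed
      have fa: "f (a # r) = (-1) ^ i * f ys" unfolding r_def i_def by (rule move_front[OF af aY])
      have bdr: "bd X f r = f (a # r) + (\<Sum>v\<in>X - {a}. f (v # r))"
        unfolding bd_def by (rule sum.remove[OF fin aX])
      have "cone X adj a (bd X f) ys = (-1) ^ i * bd X f r"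
        unfolding cone_def using True aY by (simp add: i_def r_def)
      also have "\<dots> = (-1) ^ i * ((-1) ^ i * f ys) + (-1) ^ i * (\<Sum>v\<in>X - {a}. f (v # r))"
        unfolding bdr fa by (simp add: algebra_simps)
      also have "(-1) ^ i * ((-1) ^ i * f ys) = f ys"
        by (simp add: mult.assoc[symmetric] power_mult_distrib[symmetric])
      finally show ?thesis unfolding L by simp
    qed
  qed
qed


lemma remove1_idx: "a \<in> set u \<Longrightarrow> remove1 a u = take (idx a u) u @ drop (Suc (idx a u)) u"
  by (induction u) auto

lemma nth_remove1_less:
  assumes "a \<in> set u" "i < idx a u"
  shows "remove1 a u ! i = u ! i"
proof -
  have "idx a u < length u" using idx_less[OF assms(1)] .
  thus ?thesis using assms by (simp add: remove1_idx[OF assms(1)] nth_append)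
qed

lemma sum_partition_set:
  assumes "finite A"
  shows "sum F A = sum F {x \<in> A. \<not> P x} + sum F {x \<in> A. P x}"
proof -
  have "A = {x \<in> A. \<not> P x} \<union> {x \<in> A. P x}" by auto
  hence "sum F A = sum F ({x \<in> A. \<not> P x} \<union> {x \<in> A. P x})" by simp
  also have "\<dots> = sum F {x \<in> A. \<not> P x} + sum F {x \<in> A. P x}"
    by (rule sum.union_disjoint) (use assms in auto)
  finally show ?thesis .
qed

lemma push_split:
  assumes fin: "finite X" and pX: "p \<in> X" and az: "alt z" and sz: "supp X adj z"
  shows "push X adj k z ys = (if simp0 X adj ys then (\<Sum>xs\<in>{xs \<in> pre X k ys. p \<notin> set xs}. z xs) else 0)
      + cone X adj (k p) (push X adj k (\<lambda>ys. z (p # ys))) ys"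
proof (cases "simp0 X adj ys")
  case False thus ?thesis by (simp add: push_def cone_def)
next
  case True
  define a where "a = k p"
  have fp: "finite (pre X k ys)" by (rule finite_pre[OF fin])
  have dys: "distinct ys" using True by (simp add: simp0_def)
  have part: "(\<Sum>xs\<in>pre X k ys. z xs) = (\<Sum>xs\<in>{xs \<in> pre X k ys. p \<notin> set xs}. z xs) + (\<Sum>xs\<in>{xs \<in> pre X k ys. p \<in> set xs}. z xs)"
    using sum_partition_set[OF fp, of z "\<lambda>xs. p \<in> set xs"] by simp
  have main: "(\<Sum>xs\<in>{xs \<in> pre X k ys. p \<in> set xs}. z xs) = cone X adj a (push X adj k (\<lambda>ys. z (p # ys))) ys"
  proof (cases "a \<in> set ys")
    case False
    have E: "{xs \<in> pre X k ys. p \<in> set xs} = {}"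
    proof (rule ccontr)
      assume "{xs \<in> pre X k ys. p \<in> set xs} \<noteq> {}"
      then obtain xs where "map k xs = ys" "p \<in> set xs" by (auto simp: pre_def)
      hence "a \<in> set ys" unfolding a_def by auto
      thus False using False by contradiction
    qed
    show ?thesis unfolding E using False by (simp add: cone_def)
  next
    case aY: True
    define j where "j = idx a ys"
    define r where "r = remove1 a ys"
    define ins where "ins xs = take j xs @ p # drop j xs" for xs
    have jl: "j < length ys" unfolding j_def by (rule idx_less[OF aY])
    have lr: "length r = length ys - 1" unfolding r_def using aY by (simp add: length_remove1)
    have sr: "simp0 X adj r" unfolding r_def by (rule simp0_remove1[OF True])
    have ysj: "ys ! j = a" unfolding j_def by (rule nth_idx[OF aY])
    have tr: "take j r @ a # drop j r = ys" unfolding j_def r_def by (rule take_remove1_idx[OF aY])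
    have nt: "p \<notin> set (take j xs')" if xs': "xs' \<in> pre X k r" for xs'
    proof
      assume "p \<in> set (take j xs')"
      then obtain i where i: "i < length (take j xs')" "take j xs' ! i = p" by (auto simp: in_set_conv_nth)
      have ij: "i < j" using i(1) by simp
      have il: "i < length xs'" using i(1) by simp
      have "xs' ! i = p" using i ij by simp
      hence "k p = map k xs' ! i" using il by simp
      also have "map k xs' = r" using xs' by (simp add: pre_def)
      also have "r ! i = ys ! i" unfolding r_def by (rule nth_remove1_less[OF aY ij[unfolded j_def]])
      finally have "ys ! i = ys ! j" using ysj a_def by simp
      hence "i = j" using dys ij jl nth_eq_iff_index_eq by (metis order.strict_trans)
      thus False using ij by simp
    qed
    have lxs': "length xs' = length r" if "xs' \<in> pre X k r" for xs'
      using that by (auto simp: pre_def dest!: sym[of "map k xs'"])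
    have jle: "j \<le> length xs'" if "xs' \<in> pre X k r" for xs' using lxs'[OF that] lr jl by simp
    have ins_mem: "ins xs' \<in> {xs \<in> pre X k ys. p \<in> set xs}" if xs': "xs' \<in> pre X k r" for xs'
    proof -
      have mk: "map k xs' = r" using xs' by (simp add: pre_def)
      have "map k (ins xs') = take j r @ a # drop j r"
        unfolding ins_def a_def using mk by (simp add: take_map[symmetric] drop_map[symmetric])
      thus ?thesis using xs' pX tr unfolding ins_def by (auto simp: pre_def dest: in_set_takeD in_set_dropD)
    qed
    have ins_val: "z (ins xs') = (-1) ^ j * z (p # xs')" if xs': "xs' \<in> pre X k r" for xs'
    proof -
      have i1: "idx p (ins xs') = j" "remove1 p (ins xs') = xs'"
        using idx_ins[OF nt[OF xs'] jle[OF xs']] unfolding ins_def by auto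
      have "z (p # xs') = (-1) ^ j * z (ins xs')"
        using move_front[OF az, of p "ins xs'"] i1 unfolding ins_def by simp
      hence "(-1) ^ j * z (p # xs') = ((-1) ^ j * (-1) ^ j) * z (ins xs')" by (simp add: mult.assoc)
      thus ?thesis by (simp add: power_mult_distrib[symmetric])
    qed
    have img: "ins ` pre X k r = {xs \<in> pre X k ys. p \<in> set xs}"
    proof
      show "ins ` pre X k r \<subseteq> {xs \<in> pre X k ys. p \<in> set xs}" using ins_mem by blast
    next
      show "{xs \<in> pre X k ys. p \<in> set xs} \<subseteq> ins ` pre X k r"
      proof
        fix xs assume xs: "xs \<in> {xs \<in> pre X k ys. p \<in> set xs}"
        hence pxs: "p \<in> set xs" and mk: "map k xs = ys" and sX: "set xs \<subseteq> X" by (auto simp: pre_def)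
        define i where "i = idx p xs"
        have il: "i < length xs" unfolding i_def by (rule idx_less[OF pxs])
        have "ys ! i = k (xs ! i)" using mk il by auto
        also have "xs ! i = p" unfolding i_def by (rule nth_idx[OF pxs])
        finally have "ys ! i = a" unfolding a_def .
        hence "idx a ys = i" using idx_nth[OF dys, of i] il mk by auto
        hence ji: "j = i" unfolding j_def .
        define xs' where "xs' = remove1 p xs"
        have "xs = ins xs'" unfolding ins_def xs'_def ji i_def by (rule take_remove1_idx[OF pxs, symmetric])
        moreover have "xs' \<in> pre X k r"
        proof -
          have "map k xs' = map k (take i xs @ drop (Suc i) xs)" unfolding xs'_def i_def remove1_idx[OF pxs] ..
          also have "\<dots> = take i (map k xs) @ drop (Suc i) (map k xs)" by (simp add: take_map drop_map)
          also have "\<dots> = take j ys @ drop (Suc j) ys" using mk ji by simp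
          also have "\<dots> = r" unfolding r_def j_def by (rule remove1_idx[OF aY, symmetric])
          finally show ?thesis using sX unfolding xs'_def pre_def by (auto dest: set_remove1_subset[THEN subsetD])
        qed
        ultimately show "xs \<in> ins ` pre X k r" by blast
      qed
    qed
    have inj: "inj_on ins (pre X k r)"
    proof
      fix x y assume x: "x \<in> pre X k r" and y: "y \<in> pre X k r" and e: "ins x = ins y"
      have "take j (ins x) = take j x" "drop (Suc j) (ins x) = drop j x"
        using jle[OF x] unfolding ins_def by (simp_all add: min_def)
      moreover have "take j (ins y) = take j y" "drop (Suc j) (ins y) = drop j y"
        using jle[OF y] unfolding ins_def by (simp_all add: min_def)
      ultimately have "take j x = take j y" "drop j x = drop j y" using e by metis+
      thus "x = y" by (metis append_take_drop_id)
    qed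
    have "(\<Sum>xs\<in>{xs \<in> pre X k ys. p \<in> set xs}. z xs) = (\<Sum>xs'\<in>pre X k r. z (ins xs'))"
      unfolding img[symmetric] by (rule sum.reindex[OF inj, unfolded o_def])
    also have "\<dots> = (\<Sum>xs'\<in>pre X k r. (-1) ^ j * z (p # xs'))" by (rule sum.cong[OF refl]) (rule ins_val)
    also have "\<dots> = (-1) ^ j * push X adj k (\<lambda>ys. z (p # ys)) r"
      using sr by (simp add: push_def sum_distrib_left)
    also have "\<dots> = cone X adj a (push X adj k (\<lambda>ys. z (p # ys))) ys"
      using True aY unfolding cone_def j_def r_def by simp
    finally show ?thesis .
  qed
  show ?thesis using True part main unfolding push_def a_def by simp
qed


lemma pre_filter_eq:
  assumes "\<And>x. x \<in> X \<Longrightarrow> x \<noteq> p \<Longrightarrow> k' x = k x"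
  shows "{xs \<in> pre X k' ys. p \<notin> set xs} = {xs \<in> pre X k ys. p \<notin> set xs}"
proof -
  have "map k' xs = map k xs" if "set xs \<subseteq> X" "p \<notin> set xs" for xs
    using that assms by (intro map_cong) auto
  thus ?thesis unfolding pre_def by auto
qed

lemma push_L_eq:
  assumes fin: "finite X" and sz: "supp X adj z"
    and agree: "\<And>x. x \<in> X \<Longrightarrow> x \<noteq> p \<Longrightarrow> k' x = k x"
  shows "push X adj k' (\<lambda>ys. z (p # ys)) = push X adj k (\<lambda>ys. z (p # ys))"
proof
  fix ys
  have z0: "z (p # xs) = 0" if "p \<in> set xs" for xs
    using sz that unfolding supp_def simp0_def by auto
  have red: "(\<Sum>xs\<in>pre X h ys. z (p # xs)) = (\<Sum>xs\<in>{xs \<in> pre X h ys. p \<notin> set xs}. z (p # xs))" for h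
    using sum_partition_set[OF finite_pre[OF fin], of "\<lambda>xs. z (p # xs)" h ys "\<lambda>xs. p \<in> set xs"] z0 by simp
  show "push X adj k' (\<lambda>ys. z (p # ys)) ys = push X adj k (\<lambda>ys. z (p # ys)) ys"
    using pre_filter_eq[OF agree, where ys=ys] by (simp add: push_def red)
qed

lemma single_step:
  fixes z :: "'a list \<Rightarrow> rat"
  assumes fin: "finite X" and pX: "p \<in> X"
    and kX: "\<And>x. x \<in> X \<Longrightarrow> k x \<in> X" and k'X: "\<And>x. x \<in> X \<Longrightarrow> k' x \<in> X"
    and kc: "\<And>x y. x \<in> X \<Longrightarrow> y \<in> X \<Longrightarrow> adj x y \<Longrightarrow> adj_eq adj (k x) (k y)"
    and agree: "\<And>x. x \<in> X \<Longrightarrow> x \<noteq> p \<Longrightarrow> k' x = k x"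
    and h1: "adj_eq adj (k p) (k' p)" and h1': "adj_eq adj (k' p) (k p)"
    and h2: "\<And>x. x \<in> X \<Longrightarrow> adj p x \<Longrightarrow> adj_eq adj (k' p) (k x) \<and> adj_eq adj (k x) (k' p)"
    and zc: "z \<in> cycles X adj q"
  shows "(\<lambda>ys. chain_map X adj k' z ys - chain_map X adj k z ys) \<in> boundaries X adj q"
proof -
  have zch: "z \<in> chains X adj q" and bz: "boundary X adj z = (\<lambda>_. 0)" using zc by (auto simp: cycles_def)
  have zs: "z xs \<noteq> 0 \<Longrightarrow> ordered_simplex X adj xs \<and> length xs = Suc q" for xs using zch by (simp add: chains_iff)
  have az: "alt z" using zch by (simp add: chains_iff)
  have sz: "supp X adj z" using zs unfolding supp_def ordered_simplex_simp0 by blast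
  have z0: "z [] = 0" using zs[of "[]"] by (auto simp: ordered_simplex_def)
  define a where "a = k p"
  define b where "b = k' p"
  define L where "L = (\<lambda>ys. z (p # ys))"
  define e where "e = push X adj k L"
  have aL: "alt L" unfolding L_def by (rule alt_cons[OF az])
  have sL: "supp X adj L" unfolding supp_def L_def
  proof (intro allI impI)
    fix ys assume "z (p # ys) \<noteq> 0"
    hence "simp0 X adj (p # ys)" using sz by (simp add: supp_def)
    thus "simp0 X adj ys" by (rule simp0_Cons)
  qed
  have ae: "alt e" unfolding e_def by (rule push_alt[OF aL fin])
  have eL: "\<exists>xs. xs \<in> pre X k ys \<and> z (p # xs) \<noteq> 0 \<and> simp0 X adj ys" if "e ys \<noteq> 0" for ys
  proof -
    have sy: "simp0 X adj ys" using that by (auto simp: e_def push_def split: if_splits)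
    hence "(\<Sum>xs\<in>pre X k ys. z (p # xs)) \<noteq> 0" using that by (simp add: e_def push_def L_def)
    then obtain xs where "xs \<in> pre X k ys" "z (p # xs) \<noteq> 0" by (rule sum.not_neutral_contains_not_neutral)
    thus ?thesis using sy by blast
  qed
  have elem: "\<exists>x\<in>X. y = k x \<and> adj p x \<and> adj x p \<and> length ys = q" if ey: "e ys \<noteq> 0" and yy: "y \<in> set ys" for ys y
  proof -
    obtain xs where xs: "xs \<in> pre X k ys" "z (p # xs) \<noteq> 0" using eL[OF ey] by blast
    have s: "simp0 X adj (p # xs)" using sz xs(2) by (simp add: supp_def)
    have l: "length (p # xs) = Suc q" using zs[OF xs(2)] by simp
    have mk: "map k xs = ys" using xs(1) by (simp add: pre_def)
    obtain x where x: "x \<in> set xs" "y = k x" using yy mk by auto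
    have "x \<noteq> p" using s x(1) by (auto simp: simp0_def)
    hence "adj p x \<and> adj x p" "x \<in> X" using s x(1) by (auto simp: simp0_def)
    moreover have "length ys = q" using l mk by auto
    ultimately show ?thesis using x by blast
  qed
  have bX: "b \<in> X" unfolding b_def using k'X[OF pX] .
  have aX: "a \<in> X" unfolding a_def using kX[OF pX] .
  have cb2: "adj b y \<and> adj y b" if ey: "e ys \<noteq> 0" and bn: "b \<notin> set ys" and y: "y \<in> set ys" for ys y
  proof -
    obtain x where x: "x \<in> X" "y = k x" "adj p x" using elem[OF ey y] by blast
    have "adj_eq adj b y \<and> adj_eq adj y b" using h2[OF x(1,3)] x(2) unfolding b_def by simp
    moreover have "b \<noteq> y" using bn y by blast
    ultimately show ?thesis by (auto simp: adj_eq_def)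
  qed
  have es: "simp0 X adj ys" if "e ys \<noteq> 0" for ys using eL[OF that] by blast
  have cb: "compat X adj b e" unfolding compat_def using bX es cb2 by simp
  have acb: "alt (cone X adj b e)" by (rule cone_alt[OF ae])
  have ca1: "simp0 X adj u" if "cone X adj b e u \<noteq> 0" for u using that by (auto simp: cone_def split: if_splits)
  have ca2: "adj a y \<and> adj y a" if cu: "cone X adj b e u \<noteq> 0" and an: "a \<notin> set u" and y: "y \<in> set u" for u y
  proof -
    have su: "simp0 X adj u" and bu: "b \<in> set u" and er: "e (remove1 b u) \<noteq> 0"
      using cu by (auto simp: cone_def split: if_splits)
    have ay: "a \<noteq> y" using an y by blast
    show "adj a y \<and> adj y a"
    proof (cases "y = b")
      case True
      thus ?thesis using h1 h1' ay unfolding a_def b_def by (auto simp: adj_eq_def)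
    next
      case False
      have du: "distinct u" using su by (simp add: simp0_def)
      hence "y \<in> set (remove1 b u)" using y False by simp
      then obtain x where x: "x \<in> X" "y = k x" "adj p x" "adj x p" using elem[OF er] by blast
      have "adj_eq adj a y \<and> adj_eq adj y a" using kc[OF pX x(1) x(3)] kc[OF x(1) pX x(4)] x(2) unfolding a_def by simp
      thus ?thesis using ay by (auto simp: adj_eq_def)
    qed
  qed
  have ca: "compat X adj a (cone X adj b e)" unfolding compat_def using aX ca1 ca2 by simp
  have bdL: "bd X L = (\<lambda>_. 0)"
  proof
    fix ys
    have "bd X L ys = (\<Sum>v\<in>X. - z (v # p # ys))" unfolding bd_def L_def by (intro sum.cong refl) (rule swap01[OF az])
    also have "\<dots> = - bd X z (p # ys)" by (simp add: bd_def sum_negf)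
    also have "bd X z (p # ys) = boundary X adj z (p # ys)" using boundary_bd[OF sz] by simp
    also have "\<dots> = 0" using bz by simp
    finally show "bd X L ys = 0" by simp
  qed
  have kc': "\<And>x y. x \<in> X \<Longrightarrow> y \<in> X \<Longrightarrow> adj x y \<Longrightarrow> adj_eq adj (k x) (k y)" by (rule kc)
  have bde: "bd X e = (\<lambda>_. 0)"
  proof
    fix ys
    have "bd X e ys = push X adj k (bd X L) ys" unfolding e_def by (rule bd_push[OF fin kX kc aL sL])
    thus "bd X e ys = 0" unfolding bdL by (simp add: push_def)
  qed
  define w where "w = cone X adj a (cone X adj b e)"
  have bdw: "bd X w ys = cone X adj b e ys - cone X adj a e ys" for ys
  proof -
    have cb0: "cone X adj b (\<lambda>_. 0) = (\<lambda>_. 0)" by (auto simp: cone_def)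
    have "bd X (cone X adj b e) = e"
    proof
      fix u show "bd X (cone X adj b e) u = e u" using bd_cone[OF fin ae cb, of u] bde cb0 by simp
    qed
    thus ?thesis unfolding w_def using bd_cone[OF fin acb ca, of ys] by simp
  qed
  have split_k: "push X adj h z ys = (if simp0 X adj ys then (\<Sum>xs\<in>{xs \<in> pre X h ys. p \<notin> set xs}. z xs) else 0)
      + cone X adj (h p) (push X adj h L) ys" for h ys
    unfolding L_def by (rule push_split[OF fin pX az sz])
  have diff: "push X adj k' z ys - push X adj k z ys = cone X adj b e ys - cone X adj a e ys" for ys
    using split_k[of k' ys] split_k[of k ys] pre_filter_eq[OF agree, where ys=ys]
      push_L_eq[OF fin sz agree, of p] unfolding a_def b_def e_def L_def by simp
  have wsupp: "ordered_simplex X adj u \<and> length u = Suc (Suc q)" if wu: "w u \<noteq> 0" for u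
  proof -
    have su: "simp0 X adj u" and au: "a \<in> set u" and c1: "cone X adj b e (remove1 a u) \<noteq> 0"
      using wu by (auto simp: w_def cone_def split: if_splits)
    have bu: "b \<in> set (remove1 a u)" and e1: "e (remove1 b (remove1 a u)) \<noteq> 0"
      using c1 by (auto simp: cone_def split: if_splits)
    obtain xs where xs: "xs \<in> pre X k (remove1 b (remove1 a u))" "z (p # xs) \<noteq> 0" using eL[OF e1] by blast
    have "length (p # xs) = Suc q" using zs[OF xs(2)] by simp
    moreover have "map k xs = remove1 b (remove1 a u)" using xs(1) by (simp add: pre_def)
    ultimately have lq: "length (remove1 b (remove1 a u)) = q" by (metis length_map length_Cons nat.inject)
    have l1: "length (remove1 a u) = length u - 1" using au by (simp add: length_remove1)
    have l2: "length (remove1 b (remove1 a u)) = length (remove1 a u) - 1" using bu by (simp add: length_remove1)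
    have p1: "length u > 0" using au by (cases u) auto
    have p2: "length (remove1 a u) > 0" using bu by (cases "remove1 a u") auto
    have "length u = Suc (Suc q)" using lq l1 l2 p1 p2 by linarith
    thus ?thesis using su au by (auto simp: ordered_simplex_simp0)
  qed
  have walt: "alt w" unfolding w_def by (rule cone_alt[OF acb])
  have wch: "w \<in> chains X adj (Suc q)" unfolding chains_iff using wsupp walt by simp
  have cm: "chain_map X adj h z = push X adj h z" for h by (rule chain_map_push[where c=z, OF z0])
  have bw: "boundary X adj w = (\<lambda>ys. chain_map X adj k' z ys - chain_map X adj k z ys)"
  proof
    fix ys
    have "boundary X adj w ys = (if ys = [] then 0 else bd X w ys)"
      using boundary_bd[OF cone_supp[of X adj a "cone X adj b e"]] unfolding w_def by simp
    also have "\<dots> = cone X adj b e ys - cone X adj a e ys" using bdw by (simp add: cone_def)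
    also have "\<dots> = push X adj k' z ys - push X adj k z ys" using diff by simp
    also have "\<dots> = chain_map X adj k' z ys - chain_map X adj k z ys" using cm by simp
    finally show "boundary X adj w ys = chain_map X adj k' z ys - chain_map X adj k z ys" .
  qed
  show ?thesis unfolding boundaries_def by (rule image_eqI[of _ _ w]) (use bw wch in auto)
qed


lemma subsp_chains: "subsp (chains X adj q)"
proof -
  have add: "(\<lambda>t. x t + y t) \<in> chains X adj q" if x: "x \<in> chains X adj q" and y: "y \<in> chains X adj q" for x y
  proof -
    have sup: "ordered_simplex X adj xs \<and> length xs = Suc q" if "x xs + y xs \<noteq> 0" for xs
    proof -
      have "x xs \<noteq> 0 \<or> y xs \<noteq> 0" using that by auto
      thus ?thesis using x y unfolding chains_def by blast
    qed
    have alt: "x (permute_list p xs) + y (permute_list p xs) = of_int (sign p) * (x xs + y xs)"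
      if "p permutes {..<length xs}" for xs p
      using x y that unfolding chains_def by (simp add: distrib_left)
    show ?thesis unfolding chains_def using sup alt by blast
  qed
  have scale: "(\<lambda>t. r * x t) \<in> chains X adj q" if x: "x \<in> chains X adj q" for x r
  proof -
    have sup: "ordered_simplex X adj xs \<and> length xs = Suc q" if "r * x xs \<noteq> 0" for xs
    proof -
      have "x xs \<noteq> 0" using that by auto
      thus ?thesis using x unfolding chains_def by blast
    qed
    have alt: "r * x (permute_list p xs) = of_int (sign p) * (r * x xs)"
      if "p permutes {..<length xs}" for xs p
      using x that unfolding chains_def by simp
    show ?thesis unfolding chains_def using sup alt by blast
  qed
  have zero: "(\<lambda>_. 0) \<in> chains X adj q" unfolding chains_def by simp
  show ?thesis unfolding subsp_def using add scale zero by blast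
qed

lemma lin_boundary: "lin (boundary X adj)"
  unfolding lin_def
proof (intro conjI allI)
  fix x y :: "'a list \<Rightarrow> rat"
  show "boundary X adj (\<lambda>t. x t + y t) = (\<lambda>t. boundary X adj x t + boundary X adj y t)"
    by (rule ext) (simp add: boundary_def sum.distrib)
next
  fix r and x :: "'a list \<Rightarrow> rat"
  show "boundary X adj (\<lambda>t. r * x t) = (\<lambda>t. r * boundary X adj x t)"
    by (rule ext) (simp add: boundary_def sum_distrib_left)
qed

lemma lin_chain_map: "lin (chain_map X adj k)"
  unfolding lin_def
proof (intro conjI allI)
  fix x y :: "'a list \<Rightarrow> rat"
  show "chain_map X adj k (\<lambda>t. x t + y t) = (\<lambda>t. chain_map X adj k x t + chain_map X adj k y t)"
    by (rule ext) (simp add: chain_map_def sum.distrib)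
next
  fix r and x :: "'a list \<Rightarrow> rat"
  show "chain_map X adj k (\<lambda>t. r * x t) = (\<lambda>t. r * chain_map X adj k x t)"
    by (rule ext) (simp add: chain_map_def sum_distrib_left)
qed

lemma subsp_cycles: "subsp (cycles X adj q)"
  unfolding cycles_def by (rule subsp_ker[OF subsp_chains lin_boundary])

lemma subsp_boundaries: "subsp (boundaries X adj q)"
  unfolding boundaries_def by (rule subsp_img[OF subsp_chains lin_boundary])

lemma chain_map_cong:
  assumes h: "\<And>x. x \<in> X \<Longrightarrow> k x = k' x"
  shows "chain_map X adj k = chain_map X adj k'"
proof -
  have m: "set xs \<subseteq> X \<Longrightarrow> map k xs = map k' xs" for xs using h by (intro map_cong) auto
  have "{xs. set xs \<subseteq> X \<and> map k xs = ys} = {xs. set xs \<subseteq> X \<and> map k' xs = ys}" for ys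
  proof (rule Collect_cong)
    fix xs show "(set xs \<subseteq> X \<and> map k xs = ys) = (set xs \<subseteq> X \<and> map k' xs = ys)" using m[of xs] by auto
  qed
  thus ?thesis unfolding chain_map_def by (intro ext) simp
qed

lemma homotopy_homologous:
  assumes fin: "finite X" and di: "digital_image X adj"
    and hom: "strongly_homotopic X adj g f" and zc: "z \<in> cycles X adj q"
  shows "(\<lambda>ys. chain_map X adj f z ys - chain_map X adj g z ys) \<in> boundaries X adj q"
proof -
  obtain m :: nat and H :: "'a \<Rightarrow> nat \<Rightarrow> 'a" where m: "m \<ge> 1" and HX': "\<forall>x\<in>X. \<forall>t\<le>m. H x t \<in> X"
    and H0': "\<forall>x\<in>X. H x 0 = g x" and Hm': "\<forall>x\<in>X. H x m = f x"
    and Hc': "\<forall>x\<in>X. \<forall>x'\<in>X. \<forall>t\<le>m. \<forall>t'\<le>m.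
            (x, t) \<noteq> (x', t') \<and> adj_eq adj x x' \<and> t \<le> t' + 1 \<and> t' \<le> t + 1
            \<longrightarrow> adj_eq adj (H x t) (H x' t')"
    using hom unfolding strongly_homotopic_def by (elim exE conjE) (rule that)
  have HX: "\<And>x t. x \<in> X \<Longrightarrow> t \<le> m \<Longrightarrow> H x t \<in> X" using HX' by blast
  have H0: "\<And>x. x \<in> X \<Longrightarrow> H x 0 = g x" using H0' by blast
  have Hm: "\<And>x. x \<in> X \<Longrightarrow> H x m = f x" using Hm' by blast
  have Hc: "\<And>x x' t t'. x \<in> X \<Longrightarrow> x' \<in> X \<Longrightarrow> t \<le> m \<Longrightarrow> t' \<le> m \<Longrightarrow>
        (x, t) \<noteq> (x', t') \<Longrightarrow> adj_eq adj x x' \<Longrightarrow> t \<le> t' + 1 \<Longrightarrow> t' \<le> t + 1 \<Longrightarrow>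
        adj_eq adj (H x t) (H x' t')"
  proof -
    fix x x' t t' assume "x \<in> X" "x' \<in> X" "t \<le> m" "t' \<le> m" "(x, t) \<noteq> (x', t')" "adj_eq adj x x'" "t \<le> t' + 1" "t' \<le> t + 1"
    thus "adj_eq adj (H x t) (H x' t')" using Hc' by blast
  qed
  have irr: "\<not> adj x x" for x using di by (simp add: digital_image_def)
  have sym: "adj x y \<Longrightarrow> adj y x" for x y using di by (simp add: digital_image_def)
  let ?B = "boundaries X adj q"
  have sB: "subsp ?B" by (rule subsp_boundaries)
  define hr where "hr k1 k2 \<longleftrightarrow> (\<lambda>ys. chain_map X adj k1 z ys - chain_map X adj k2 z ys) \<in> ?B" for k1 k2
  have hr_refl: "hr k k" for k unfolding hr_def using subsp_zero[OF sB] by simp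
  have hr_trans: "hr k1 k3" if "hr k1 k2" "hr k2 k3" for k1 k2 k3
  proof -
    have "(\<lambda>ys. (\<lambda>ys. chain_map X adj k1 z ys - chain_map X adj k2 z ys) ys +
        (\<lambda>ys. chain_map X adj k2 z ys - chain_map X adj k3 z ys) ys) \<in> ?B"
      using that unfolding hr_def by (intro subsp_add[OF sB])
    thus ?thesis unfolding hr_def by simp
  qed
  have hr_cong: "hr k1 k2" if h: "hr k1' k2'" and e1: "\<And>x. x \<in> X \<Longrightarrow> k1 x = k1' x"
    and e2: "\<And>x. x \<in> X \<Longrightarrow> k2 x = k2' x" for k1 k2 k1' k2'
  proof -
    have "chain_map X adj k1 = chain_map X adj k1'" by (rule chain_map_cong[OF e1])
    moreover have "chain_map X adj k2 = chain_map X adj k2'" by (rule chain_map_cong[OF e2])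
    ultimately show ?thesis using h unfolding hr_def by simp
  qed
  define K where "K t S x = H x (if x \<in> S then Suc t else t)" for t S x
  have stepA: "hr (K t S) (\<lambda>x. H x t)" if t: "t < m" and S: "finite S" "S \<subseteq> X" for t S
    using S
  proof (induction S rule: finite_induct)
    case empty
    have "K t {} = (\<lambda>x. H x t)" by (simp add: K_def fun_eq_iff)
    thus ?case using hr_refl by simp
  next
    case (insert p S)
    have pX: "p \<in> X" using insert by simp
    have KX: "K t T x \<in> X" if "x \<in> X" for T x unfolding K_def by (rule HX[OF that]) (use t in auto)
    have Kc: "adj_eq adj (K t T x) (K t T' y)" if "x \<in> X" "y \<in> X" "x \<noteq> y" "adj_eq adj x y" for T T' x y
      unfolding K_def by (rule Hc) (use that t in auto)
    have kp: "K t S p = H p t" "K t (insert p S) p = H p (Suc t)" using insert by (auto simp: K_def)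
    have step: "hr (K t (insert p S)) (K t S)"
      unfolding hr_def
    proof (rule single_step[OF fin pX])
      show "\<And>x. x \<in> X \<Longrightarrow> K t S x \<in> X" by (rule KX)
      show "\<And>x. x \<in> X \<Longrightarrow> K t (insert p S) x \<in> X" by (rule KX)
      show "\<And>x y. x \<in> X \<Longrightarrow> y \<in> X \<Longrightarrow> adj x y \<Longrightarrow> adj_eq adj (K t S x) (K t S y)"
      proof -
        fix x y assume xy: "x \<in> X" "y \<in> X" "adj x y"
        have "x \<noteq> y" using xy(3) irr by blast
        thus "adj_eq adj (K t S x) (K t S y)" using Kc[OF xy(1,2)] xy(3) by (simp add: adj_eq_def)
      qed
      show "\<And>x. x \<in> X \<Longrightarrow> x \<noteq> p \<Longrightarrow> K t (insert p S) x = K t S x" by (simp add: K_def)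
      show "adj_eq adj (K t S p) (K t (insert p S) p)" unfolding kp by (rule Hc) (use pX t in \<open>auto simp: adj_eq_def\<close>)
      show "adj_eq adj (K t (insert p S) p) (K t S p)" unfolding kp by (rule Hc) (use pX t in \<open>auto simp: adj_eq_def\<close>)
      show "\<And>x. x \<in> X \<Longrightarrow> adj p x \<Longrightarrow> adj_eq adj (K t (insert p S) p) (K t S x) \<and> adj_eq adj (K t S x) (K t (insert p S) p)"
      proof -
        fix x assume x: "x \<in> X" "adj p x"
        have xp: "x \<noteq> p" using x(2) irr by blast
        have a1: "adj_eq adj (H p (Suc t)) (K t S x)" unfolding K_def
          by (rule Hc) (use pX x xp t in \<open>auto simp: adj_eq_def\<close>)
        have a2: "adj_eq adj (K t S x) (H p (Suc t))" unfolding K_def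
          by (rule Hc) (use pX x xp t sym in \<open>auto simp: adj_eq_def\<close>)
        show "adj_eq adj (K t (insert p S) p) (K t S x) \<and> adj_eq adj (K t S x) (K t (insert p S) p)"
          unfolding kp using a1 a2 by simp
      qed
      show "z \<in> cycles X adj q" by (rule zc)
    qed
    show ?case using hr_trans[OF step insert.IH] insert by simp
  qed
  have stepB: "hr (\<lambda>x. H x t) (\<lambda>x. H x 0)" if "t \<le> m" for t
    using that
  proof (induction t)
    case 0 show ?case by (rule hr_refl)
  next
    case (Suc t)
    have "hr (K t X) (\<lambda>x. H x t)" using stepA[of t X] Suc.prems fin by simp
    hence "hr (\<lambda>x. H x (Suc t)) (\<lambda>x. H x t)" by (rule hr_cong) (auto simp: K_def)
    thus ?case using hr_trans Suc by simp
  qed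
  have "hr f g" by (rule hr_cong[OF stepB[OF order.refl]]) (auto simp: Hm H0)
  thus ?thesis unfolding hr_def .
qed



lemma chains_props:
  assumes "c \<in> chains X adj q"
  shows "supp X adj c" "c [] = 0" "alt c" "\<And>xs. c xs \<noteq> 0 \<Longrightarrow> ordered_simplex X adj xs \<and> length xs = Suc q"
proof -
  have h: "c xs \<noteq> 0 \<Longrightarrow> ordered_simplex X adj xs \<and> length xs = Suc q" for xs using assms by (simp add: chains_iff)
  show "\<And>xs. c xs \<noteq> 0 \<Longrightarrow> ordered_simplex X adj xs \<and> length xs = Suc q" by (rule h)
  show "supp X adj c" unfolding supp_def using h by (auto simp: ordered_simplex_simp0)
  show "c [] = 0" using h[of "[]"] by (auto simp: ordered_simplex_def)
  show "alt c" using assms by (simp add: chains_iff)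
qed

lemma bd_eq_boundary:
  assumes "c \<in> chains X adj (Suc q)"
  shows "boundary X adj c = bd X c"
proof
  fix ys
  have "c [v] = 0" for v using chains_props(4)[OF assms, of "[v]"] by auto
  hence "bd X c [] = 0" by (simp add: bd_def)
  thus "boundary X adj c ys = bd X c ys" using boundary_bd[OF chains_props(1)[OF assms]] by simp
qed

lemma boundary_chains:
  assumes c: "c \<in> chains X adj (Suc q)"
  shows "boundary X adj c \<in> chains X adj q"
proof -
  have s: "ordered_simplex X adj ys \<and> length ys = Suc q" if nz: "boundary X adj c ys \<noteq> 0" for ys
  proof -
    have os: "ordered_simplex X adj ys" using nz by (auto simp: boundary_def split: if_splits)
    have "(\<Sum>v\<in>X. c (v # ys)) \<noteq> 0" using nz by (auto simp: boundary_def split: if_splits)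
    then obtain v where "v \<in> X" "c (v # ys) \<noteq> 0" by (rule sum.not_neutral_contains_not_neutral)
    hence "length (v # ys) = Suc (Suc q)" using chains_props(4)[OF c] by blast
    thus ?thesis using os by simp
  qed
  have a: "alt (boundary X adj c)"
    unfolding alt_def
  proof (intro allI impI)
    fix ys :: "'a list" and p assume p: "p permutes {..<length ys}"
    have pe: "permute_list p ys = [] \<longleftrightarrow> ys = []" by (metis length_permute_list length_0_conv)
    have osp: "ordered_simplex X adj (permute_list p ys) \<longleftrightarrow> ordered_simplex X adj ys"
      using simp0_perm[OF p] pe by (simp add: ordered_simplex_simp0)
    have "c (v # permute_list p ys) = of_int (sign p) * c (v # ys)" for v
      using altD[OF alt_cons[OF chains_props(3)[OF c]] p] by simp
    thus "boundary X adj c (permute_list p ys) = of_int (sign p) * boundary X adj c ys"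
      unfolding boundary_def osp by (simp add: sum_distrib_left)
  qed
  show ?thesis unfolding chains_iff using s a by blast
qed

lemma boundary0:
  assumes "c \<in> chains X adj 0"
  shows "boundary X adj c = (\<lambda>_. 0)"
proof
  fix ys
  have "c (v # ys) = 0" if "ys \<noteq> []" for v using chains_props(4)[OF assms, of "v # ys"] that by auto
  thus "boundary X adj c ys = 0" by (auto simp: boundary_def ordered_simplex_def)
qed

lemma boundary_boundary:
  assumes fin: "finite X" and c: "c \<in> chains X adj q"
  shows "boundary X adj (boundary X adj c) = (\<lambda>_. 0)"
proof
  fix ys
  have bc: "boundary X adj c = (\<lambda>ys. if ys = [] then 0 else bd X c ys)" by (rule boundary_bd[OF chains_props(1)[OF c]])
  have ac: "alt c" by (rule chains_props(3)[OF c])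
  have "(\<Sum>v\<in>X. \<Sum>w\<in>X. c (w # v # ys)) = (\<Sum>w\<in>X. \<Sum>v\<in>X. c (w # v # ys))" by (rule sum.swap)
  also have "\<dots> = (\<Sum>w\<in>X. \<Sum>v\<in>X. - c (v # w # ys))" by (intro sum.cong refl) (rule swap01[OF ac])
  finally have "(\<Sum>v\<in>X. \<Sum>w\<in>X. c (w # v # ys)) = - (\<Sum>v\<in>X. \<Sum>w\<in>X. c (w # v # ys))"
    by (simp add: sum_negf)
  hence z: "(\<Sum>v\<in>X. \<Sum>w\<in>X. c (w # v # ys)) = 0" by simp
  have "boundary X adj (boundary X adj c) ys = (if ordered_simplex X adj ys then \<Sum>v\<in>X. boundary X adj c (v # ys) else 0)"
    by (simp add: boundary_def)
  also have "\<dots> = (if ordered_simplex X adj ys then \<Sum>v\<in>X. \<Sum>w\<in>X. c (w # v # ys) else 0)"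
    using bc by (simp add: bd_def)
  finally show "boundary X adj (boundary X adj c) ys = 0" using z by simp
qed

lemma chain_map_chains:
  assumes fin: "finite X" and c: "c \<in> chains X adj q"
  shows "chain_map X adj h c \<in> chains X adj q"
proof -
  have eq: "chain_map X adj h c = push X adj h c" by (rule chain_map_push[where c=c, OF chains_props(2)[OF c]])
  have a: "alt (push X adj h c)" by (rule push_alt[OF chains_props(3)[OF c] fin])
  have s: "ordered_simplex X adj ys \<and> length ys = Suc q" if "push X adj h c ys \<noteq> 0" for ys
  proof -
    have sy: "simp0 X adj ys" using that by (auto simp: push_def split: if_splits)
    have "(\<Sum>xs\<in>pre X h ys. c xs) \<noteq> 0" using that by (auto simp: push_def split: if_splits)
    then obtain xs where xs: "xs \<in> pre X h ys" "c xs \<noteq> 0" by (rule sum.not_neutral_contains_not_neutral)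
    have "length xs = Suc q" using chains_props(4)[OF c xs(2)] by simp
    moreover have "map h xs = ys" using xs(1) by (simp add: pre_def)
    ultimately have "length ys = Suc q" by auto
    thus ?thesis using sy by (auto simp: ordered_simplex_simp0)
  qed
  show ?thesis unfolding eq chains_iff using a s by blast
qed

lemma chain_map_boundary:
  assumes fin: "finite X" and hX: "\<And>x. x \<in> X \<Longrightarrow> h x \<in> X"
    and hc: "\<And>x y. x \<in> X \<Longrightarrow> y \<in> X \<Longrightarrow> adj x y \<Longrightarrow> adj_eq adj (h x) (h y)"
    and c: "c \<in> chains X adj (Suc q)"
  shows "chain_map X adj h (boundary X adj c) = boundary X adj (chain_map X adj h c)"
proof -
  have bcq: "boundary X adj c \<in> chains X adj q" by (rule boundary_chains[OF c])
  have hcq: "chain_map X adj h c \<in> chains X adj (Suc q)" by (rule chain_map_chains[OF fin c])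
  have "chain_map X adj h (boundary X adj c) = push X adj h (bd X c)"
    using chain_map_push[where c="boundary X adj c", OF chains_props(2)[OF bcq]] bd_eq_boundary[OF c] by simp
  also have "\<dots> = bd X (push X adj h c)"
    using bd_push[OF fin hX hc chains_props(3)[OF c] chains_props(1)[OF c]] by (intro ext) simp
  also have "\<dots> = boundary X adj (chain_map X adj h c)"
    using bd_eq_boundary[OF hcq] chain_map_push[where c=c, OF chains_props(2)[OF c]] by simp
  finally show ?thesis .
qed


lemma chains_fin_supp: "c \<in> chains X adj q \<Longrightarrow> c y \<noteq> 0 \<Longrightarrow> y \<in> {xs. set xs \<subseteq> X \<and> length xs = Suc q}"
  using chains_props(4)[of c X adj q y] by (auto simp: ordered_simplex_def)

lemma finite_S: "finite X \<Longrightarrow> finite {xs. set xs \<subseteq> X \<and> length xs = Suc q}"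
  by (rule finite_lists_length_eq)

lemma cycles_sub: "cycles X adj q \<subseteq> chains X adj q" by (auto simp: cycles_def)

lemma boundaries_sub:
  assumes "finite X" shows "boundaries X adj q \<subseteq> cycles X adj q"
proof
  fix b assume "b \<in> boundaries X adj q"
  then obtain c where c: "c \<in> chains X adj (Suc q)" "b = boundary X adj c" by (auto simp: boundaries_def)
  thus "b \<in> cycles X adj q" using boundary_chains[OF c(1)] boundary_boundary[OF assms c(1)] by (simp add: cycles_def)
qed

lemma Zero_sub: "Zero \<subseteq> boundaries X adj q"
  using subsp_zero[OF subsp_boundaries] by (auto simp: Zero_def)

lemma T_maps:
  assumes fin: "finite X" and hc: "dcontinuous X adj h"
  shows "chain_map X adj h ` chains X adj q \<subseteq> chains X adj q"
    "chain_map X adj h ` cycles X adj q \<subseteq> cycles X adj q"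
    "chain_map X adj h ` boundaries X adj q \<subseteq> boundaries X adj q"
    "chain_map X adj h ` Zero \<subseteq> Zero"
proof -
  have hX: "\<And>x. x \<in> X \<Longrightarrow> h x \<in> X" and hcc: "\<And>x y. x \<in> X \<Longrightarrow> y \<in> X \<Longrightarrow> adj x y \<Longrightarrow> adj_eq adj (h x) (h y)"
    using hc by (auto simp: dcontinuous_def)
  show 1: "chain_map X adj h ` chains X adj q \<subseteq> chains X adj q" using chain_map_chains[OF fin] by blast
  show "chain_map X adj h ` cycles X adj q \<subseteq> cycles X adj q"
  proof
    fix y assume "y \<in> chain_map X adj h ` cycles X adj q"
    then obtain z where z: "z \<in> cycles X adj q" "y = chain_map X adj h z" by blast
    have zc: "z \<in> chains X adj q" and bz: "boundary X adj z = (\<lambda>_. 0)" using z by (auto simp: cycles_def)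
    have yc: "y \<in> chains X adj q" using chain_map_chains[OF fin zc] z by simp
    have "boundary X adj y = (\<lambda>_. 0)"
    proof (cases q)
      case 0 thus ?thesis using boundary0 yc by simp
    next
      case (Suc q')
      have "boundary X adj y = chain_map X adj h (boundary X adj z)"
        using chain_map_boundary[OF fin hX hcc, where c=z and q=q'] zc Suc z by simp
      thus ?thesis using bz lin_zero[OF lin_chain_map] by simp
    qed
    thus "y \<in> cycles X adj q" using yc by (simp add: cycles_def)
  qed
  show "chain_map X adj h ` boundaries X adj q \<subseteq> boundaries X adj q"
  proof
    fix y assume "y \<in> chain_map X adj h ` boundaries X adj q"
    then obtain c where c: "c \<in> chains X adj (Suc q)" "y = chain_map X adj h (boundary X adj c)"
      by (auto simp: boundaries_def)
    have "y = boundary X adj (chain_map X adj h c)" using chain_map_boundary[OF fin hX hcc c(1)] c by simp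
    moreover have "chain_map X adj h c \<in> chains X adj (Suc q)" by (rule chain_map_chains[OF fin c(1)])
    ultimately show "y \<in> boundaries X adj q" by (auto simp: boundaries_def)
  qed
  show "chain_map X adj h ` Zero \<subseteq> Zero" using lin_zero[OF lin_chain_map] by (auto simp: Zero_def)
qed

lemma qt_add:
  assumes sB: "subsp B" and sZ: "subsp Z" and sV: "subsp V" and BZ: "B \<subseteq> Z" and ZV: "Z \<subseteq> V"
    and finS: "finite S" and supp: "\<And>v y. v \<in> V \<Longrightarrow> v y \<noteq> 0 \<Longrightarrow> y \<in> S"
    and lT: "lin T" and TV: "T ` V \<subseteq> V" and TZ: "T ` Z \<subseteq> Z" and TB: "T ` B \<subseteq> B"
  shows "quot_trace V B T = quot_trace V Z T + quot_trace Z B T"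
proof -
  obtain cs where cs: "quot_basis Z B cs" using qb_exists[OF sB sZ BZ finS] supp ZV by blast
  obtain ds where ds: "quot_basis V Z ds" using qb_exists[OF sZ sV ZV finS] supp by blast
  have qa: "quot_basis V B (cs @ ds)" by (rule qb_append[OF sB sZ sV BZ ZV cs ds])
  have "quot_trace V B T = trw B (cs @ ds) T" by (rule quot_trace_basis[OF sB sV lT TV TB qa])
  also have "\<dots> = trw B cs T + trw Z ds T" by (rule trw_append[OF sB sZ sV BZ ZV cs ds lT TV TZ])
  also have "trw B cs T = quot_trace Z B T" by (rule quot_trace_basis[OF sB sZ lT TZ TB cs, symmetric])
  also have "trw Z ds T = quot_trace V Z T" by (rule quot_trace_basis[OF sZ sV lT TV TZ ds, symmetric])
  finally show ?thesis by simp
qed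

lemma qt_self:
  assumes sV: "subsp V" and lT: "lin T" and TV: "T ` V \<subseteq> V"
  shows "quot_trace V V T = 0"
proof -
  have "quot_basis V V []"
    unfolding quot_basis_iff[OF sV sV] indepm_def spansm_def eqv_def lincomb_def by simp
  thus ?thesis using quot_trace_basis[OF sV sV lT TV TV] by (simp add: trw_def)
qed


lemma rs_chain:
  assumes os: "ordered_simplex X adj u" and l: "length u = Suc q"
  shows "rs u \<in> chains X adj q"
proof -
  have du: "distinct u" using os by (simp add: ordered_simplex_def)
  have "ordered_simplex X adj w \<and> length w = Suc q" if "rs u w \<noteq> 0" for w
  proof -
    have "length w = length u" "set w = set u" "distinct w" using rs_nz[OF that du] by auto
    thus ?thesis using os l unfolding ordered_simplex_def by auto
  qed
  thus ?thesis unfolding chains_iff using alt_rs[OF du] by blast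
qed

lemma trace_chains_zero:
  assumes fin: "finite X" and gX: "\<And>x. x \<in> X \<Longrightarrow> g x \<in> X"
    and noafp: "\<And>x. x \<in> X \<Longrightarrow> \<not> adj_eq adj (g x) x"
  shows "quot_trace (chains X adj q) Zero (chain_map X adj g) = 0"
proof -
  let ?C = "chains X adj q"
  let ?T = "chain_map X adj g"
  define SS where "SS = {set xs | xs. ordered_simplex X adj xs \<and> length xs = Suc q}"
  define rep where "rep s = (SOME xs. ordered_simplex X adj xs \<and> length xs = Suc q \<and> set xs = s)" for s
  have rep: "ordered_simplex X adj (rep s) \<and> length (rep s) = Suc q \<and> set (rep s) = s" if "s \<in> SS" for s
  proof -
    have "\<exists>xs. ordered_simplex X adj xs \<and> length xs = Suc q \<and> set xs = s" using that unfolding SS_def by blast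
    thus ?thesis unfolding rep_def by (rule someI_ex)
  qed
  have finSS: "finite SS"
  proof (rule finite_subset[of _ "Pow X"])
    show "SS \<subseteq> Pow X" unfolding SS_def ordered_simplex_def by auto
  qed (use fin in simp)
  obtain l where l: "set l = SS" "distinct l" using finite_distinct_list[OF finSS] by blast
  define n where "n = length l"
  define cs where "cs = map (\<lambda>s. rs (rep s)) l"
  have lcs: "length cs = n" unfolding cs_def n_def by simp
  have lmem: "l ! i \<in> SS" if "i < n" for i using l(1) that unfolding n_def by auto
  have repi: "ordered_simplex X adj (rep (l ! i)) \<and> length (rep (l ! i)) = Suc q \<and> set (rep (l ! i)) = l ! i"
    if "i < n" for i using rep[OF lmem[OF that]] .
  have drep: "distinct (rep (l ! i))" if "i < n" for i using repi[OF that] by (simp add: ordered_simplex_def)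
  have rs_other: "rs (rep (l ! j)) xs = 0" if "j < n" "l ! j \<noteq> set xs" for j xs
  proof (rule ccontr)
    assume "rs (rep (l ! j)) xs \<noteq> 0"
    hence "set xs = set (rep (l ! j))" using rs_nz[OF _ drep[OF that(1)]] by blast
    thus False using repi[OF that(1)] that(2) by simp
  qed
  have expand: "c xs = (\<Sum>j<n. c (rep (l ! j)) * rs (rep (l ! j)) xs)" if c: "c \<in> ?C" for c xs
  proof (cases "ordered_simplex X adj xs \<and> length xs = Suc q")
    case True
    have "set xs \<in> SS" unfolding SS_def using True by blast
    then obtain i where i: "i < n" "l ! i = set xs" using l(1) unfolding n_def by (metis in_set_conv_nth)
    have dxs: "distinct xs" using True by (simp add: ordered_simplex_def)
    have "mset xs = mset (rep (l ! i))"
      using repi[OF i(1)] i(2) dxs drep[OF i(1)] by (simp add: set_eq_iff_mset_eq_distinct)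
    then obtain p where p: "p permutes {..<length (rep (l ! i))}" "permute_list p (rep (l ! i)) = xs"
      by (rule mset_eq_permutation)
    have cx: "c xs = of_int (sign p) * c (rep (l ! i))" using altD[OF chains_props(3)[OF c] p(1)] p(2) by simp
    have rx: "rs (rep (l ! i)) xs = of_int (sign p)" using rs_perm[OF drep[OF i(1)] p(1)] p(2) by simp
    have "(\<Sum>j<n. c (rep (l ! j)) * rs (rep (l ! j)) xs) = (\<Sum>j<n. if j = i then c (rep (l ! i)) * of_int (sign p) else 0)"
    proof (rule sum.cong[OF refl])
      fix j assume j: "j \<in> {..<n}"
      show "c (rep (l ! j)) * rs (rep (l ! j)) xs = (if j = i then c (rep (l ! i)) * of_int (sign p) else 0)"
      proof (cases "j = i")
        case True thus ?thesis using rx by simp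
      next
        case False
        hence "l ! j \<noteq> l ! i" using l(2) i(1) j unfolding n_def by (simp add: nth_eq_iff_index_eq)
        thus ?thesis using rs_other[of j xs] j i(2) False by simp
      qed
    qed
    also have "\<dots> = c xs" using i(1) cx by simp
    finally show ?thesis by simp
  next
    case False
    have "c xs = 0" using chains_props(4)[OF c, of xs] False by blast
    moreover have "rs (rep (l ! j)) xs = 0" if "j < n" for j
    proof (rule ccontr)
      assume "rs (rep (l ! j)) xs \<noteq> 0"
      hence "rs (rep (l ! j)) \<in> ?C" "rs (rep (l ! j)) xs \<noteq> 0" using rs_chain repi[OF that] by auto
      thus False using chains_props(4) False by blast
    qed
    ultimately show ?thesis by simp
  qed
  have csC: "set cs \<subseteq> ?C"
  proof
    fix c assume "c \<in> set cs"
    then obtain i where i: "i < n" "c = rs (rep (l ! i))" unfolding cs_def n_def by (auto simp: in_set_conv_nth)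
    show "c \<in> ?C" using rs_chain[of X adj "rep (l ! i)" q] repi[OF i(1)] i(2) by simp
  qed
  have eval: "lincomb a cs (rep (l ! j)) = a ! j" if "j < n" "length a = n" for a j
  proof -
    have "lincomb a cs (rep (l ! j)) = (\<Sum>i<n. a ! i * rs (rep (l ! i)) (rep (l ! j)))"
      unfolding lincomb_def lcs unfolding cs_def n_def by simp
    also have "\<dots> = (\<Sum>i<n. if i = j then a ! j else 0)"
    proof (rule sum.cong[OF refl])
      fix i assume i: "i \<in> {..<n}"
      show "a ! i * rs (rep (l ! i)) (rep (l ! j)) = (if i = j then a ! j else 0)"
      proof (cases "i = j")
        case True thus ?thesis using rs_self[OF drep[OF that(1)]] by simp
      next
        case False
        hence "l ! i \<noteq> l ! j" using l(2) i that(1) unfolding n_def by (simp add: nth_eq_iff_index_eq)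
        hence "l ! i \<noteq> set (rep (l ! j))" using repi[OF that(1)] by simp
        thus ?thesis using rs_other[of i "rep (l ! j)"] i False by simp
      qed
    qed
    also have "\<dots> = a ! j" using that by simp
    finally show ?thesis .
  qed
  have lc: "lincomb (map (\<lambda>s. c (rep s)) l) cs = c" if "c \<in> ?C" for c
  proof
    fix xs
    show "lincomb (map (\<lambda>s. c (rep s)) l) cs xs = c xs"
      unfolding lincomb_def lcs using expand[OF that, of xs] unfolding cs_def n_def by simp
  qed
  have qb: "quot_basis ?C Zero cs"
    unfolding quot_basis_iff[OF subsp_Zero subsp_chains]
  proof (intro conjI)
    show "set cs \<subseteq> ?C" by (rule csC)
    show "indepm Zero cs" unfolding indepm_def
    proof (intro allI impI)
      fix a i assume a: "length a = length cs" "lincomb a cs \<in> Zero" "i < length cs"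
      have "lincomb a cs (rep (l ! i)) = 0" using a(2) by (simp add: Zero_def)
      thus "a ! i = 0" using eval[of i a] a lcs by simp
    qed
    show "spansm ?C Zero cs" unfolding spansm_def
    proof
      fix c assume c: "c \<in> ?C"
      show "\<exists>a. length a = length cs \<and> eqv Zero c (lincomb a cs)"
        using lc[OF c] lcs unfolding n_def by (intro exI[of _ "map (\<lambda>s. c (rep s)) l"]) (simp add: eqv_Zero)
    qed
  qed
  have coefv: "coef Zero cs v = map (\<lambda>s. v (rep s)) l" if "v \<in> ?C" for v
    by (rule coef_unique[OF qb that]) (use lc[OF that] lcs n_def in \<open>simp_all add: eqv_Zero\<close>)
  have diag: "coef Zero cs (?T (cs ! i)) ! i = 0" if i: "i < n" for i
  proof -
    define u where "u = rep (l ! i)"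
    have uC: "rs u \<in> ?C" unfolding u_def using rs_chain repi[OF i] by blast
    have TC: "?T (rs u) \<in> ?C" by (rule chain_map_chains[OF fin uC])
    have "coef Zero cs (?T (cs ! i)) ! i = ?T (rs u) u"
      using coefv[OF TC] i unfolding cs_def u_def n_def by simp
    also have "\<dots> = 0"
    proof -
      have ou: "ordered_simplex X adj u" and du: "distinct u" unfolding u_def using repi[OF i] drep[OF i] by auto
      have "rs u xs = 0" if xs: "set xs \<subseteq> X" "map g xs = u" for xs
      proof (rule ccontr)
        assume "rs u xs \<noteq> 0"
        hence sx: "set xs = set u" using rs_nz[OF _ du] by blast
        have "u \<noteq> []" using ou by (simp add: ordered_simplex_def)
        hence "xs \<noteq> []" using xs(2) by auto
        then obtain x where x: "x \<in> set xs" by (cases xs) auto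
        have gx: "g x \<in> set u" using x xs(2) by auto
        have xu: "x \<in> set u" using x sx by simp
        have "adj_eq adj (g x) x" using ou gx xu unfolding ordered_simplex_def adj_eq_def by blast
        moreover have "x \<in> X" using x xs(1) by auto
        ultimately show False using noafp by blast
      qed
      thus ?thesis unfolding chain_map_def by simp
    qed
    finally show ?thesis .
  qed
  have "quot_trace ?C Zero ?T = trw Zero cs ?T"
    by (rule quot_trace_basis[OF subsp_Zero subsp_chains lin_chain_map _ _ qb])
       (use chain_map_chains[OF fin] lin_zero[OF lin_chain_map] in \<open>auto simp: Zero_def\<close>)
  also have "\<dots> = 0" unfolding trw_def lcs using diag by simp
  finally show ?thesis .
qed


lemma telescope:
  assumes r0: "r 0 = (0::rat)" and rs: "\<And>q. r (Suc q) = b q"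
  shows "(\<Sum>q\<le>n. (-1) ^ q * (r q + b q)) = (-1) ^ n * b n"
proof (induction n)
  case 0 thus ?case using r0 by simp
next
  case (Suc n)
  have "(\<Sum>q\<le>Suc n. (-1) ^ q * (r q + b q)) = (-1) ^ n * b n + (-1) ^ Suc n * (b n + b (Suc n))"
    using Suc rs by simp
  also have "\<dots> = (-1) ^ Suc n * b (Suc n)" by (simp add: algebra_simps)
  finally show ?case .
qed

lemma lefschetz_zero:
  assumes fin: "finite X" and gc: "dcontinuous X adj g"
    and noafp: "\<And>x. x \<in> X \<Longrightarrow> \<not> adj_eq adj (g x) x"
  shows "lefschetz X adj g = 0"
proof -
  let ?T = "chain_map X adj g"
  let ?C = "\<lambda>q. chains X adj q"
  let ?Z = "\<lambda>q. cycles X adj q"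
  let ?B = "\<lambda>q. boundaries X adj q"
  let ?S = "\<lambda>q. {xs. set xs \<subseteq> X \<and> length xs = Suc q}"
  have gX: "\<And>x. x \<in> X \<Longrightarrow> g x \<in> X" and gcc: "\<And>x y. x \<in> X \<Longrightarrow> y \<in> X \<Longrightarrow> adj x y \<Longrightarrow> adj_eq adj (g x) (g y)"
    using gc by (auto simp: dcontinuous_def)
  have lT: "lin ?T" by (rule lin_chain_map)
  have TC: "?T ` ?C q \<subseteq> ?C q" and TZ: "?T ` ?Z q \<subseteq> ?Z q" and TB: "?T ` ?B q \<subseteq> ?B q" and T0: "?T ` Zero \<subseteq> Zero" for q
    using T_maps[OF fin gc] by blast+
  have finS: "finite (?S q)" for q by (rule finite_S[OF fin])
  have suppC: "\<And>v y. v \<in> ?C q \<Longrightarrow> v y \<noteq> 0 \<Longrightarrow> y \<in> ?S q" for q by (rule chains_fin_supp)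
  have suppZ: "\<And>v y. v \<in> ?Z q \<Longrightarrow> v y \<noteq> 0 \<Longrightarrow> y \<in> ?S q" for q using suppC cycles_sub by blast
  have BZ: "?B q \<subseteq> ?Z q" for q by (rule boundaries_sub[OF fin])
  have ZC: "?Z q \<subseteq> ?C q" for q by (rule cycles_sub)
  have B0: "Zero \<subseteq> ?B q" for q by (rule Zero_sub)
  define h where "h q = quot_trace (?Z q) (?B q) ?T" for q
  define b where "b q = quot_trace (?B q) Zero ?T" for q
  define r where "r q = quot_trace (?C q) (?Z q) ?T" for q
  define t where "t q = quot_trace (?C q) Zero ?T" for q
  have ht: "t q = r q + (h q + b q)" for q
  proof -
    have "t q = r q + quot_trace (?Z q) Zero ?T" unfolding t_def r_def
      by (rule qt_add[OF subsp_Zero subsp_cycles subsp_chains _ ZC finS suppC lT TC TZ T0]) (use B0 BZ in blast)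
    also have "quot_trace (?Z q) Zero ?T = h q + b q" unfolding h_def b_def
      by (rule qt_add[OF subsp_Zero subsp_boundaries subsp_cycles B0 BZ finS suppZ lT TZ TB T0])
    finally show ?thesis .
  qed
  have t0: "t q = 0" for q unfolding t_def by (rule trace_chains_zero[OF fin gX noafp])
  have rS: "r (Suc q) = b q" for q
  proof -
    have "\<exists>ds. quot_basis (?C (Suc q)) (?Z (Suc q)) ds"
      by (rule qb_exists[OF subsp_cycles subsp_chains ZC finS]) (rule suppC)
    then obtain ds where ds: "quot_basis (?C (Suc q)) (?Z (Suc q)) ds" by blast
    have comm: "\<And>c. c \<in> ?C (Suc q) \<Longrightarrow> ?T (boundary X adj c) = boundary X adj (?T c)"
      by (rule chain_map_boundary[OF fin gX gcc])
    have ds': "quot_basis (?C (Suc q)) {c \<in> ?C (Suc q). boundary X adj c = (\<lambda>_. 0)} ds"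
      using ds by (simp add: cycles_def)
    have tb: "quot_basis (boundary X adj ` ?C (Suc q)) Zero (map (boundary X adj) ds) \<and>
      trw Zero (map (boundary X adj) ds) ?T = trw {c \<in> ?C (Suc q). boundary X adj c = (\<lambda>_. 0)} ds ?T"
      by (rule trw_bd[OF subsp_chains lin_boundary lT TC comm ds'])
    have "r (Suc q) = trw (?Z (Suc q)) ds ?T" unfolding r_def
      by (rule quot_trace_basis[OF subsp_cycles subsp_chains lT TC TZ ds])
    also have "\<dots> = trw Zero (map (boundary X adj) ds) ?T" using tb by (simp add: cycles_def)
    also have "\<dots> = b q" unfolding b_def
      by (rule quot_trace_basis[OF subsp_Zero subsp_boundaries lT TB T0, symmetric]) (use tb in \<open>simp add: boundaries_def\<close>)
    finally show ?thesis .
  qed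
  have r0: "r 0 = 0"
  proof -
    have "?Z 0 = ?C 0" using boundary0 by (auto simp: cycles_def)
    thus ?thesis unfolding r_def using qt_self[OF subsp_chains lT TC] by simp
  qed
  define N where "N = card X"
  have bN: "b N = 0"
  proof -
    have cz: "c = (\<lambda>_. 0)" if c: "c \<in> ?C (Suc N)" for c
    proof
      fix xs show "c xs = 0"
      proof (rule ccontr)
        assume "c xs \<noteq> 0"
        hence os: "ordered_simplex X adj xs" and l: "length xs = Suc (Suc N)" using chains_props(4)[OF c] by auto
        have "card (set xs) = length xs" using os by (simp add: ordered_simplex_def distinct_card)
        moreover have "card (set xs) \<le> card X" using os fin by (intro card_mono) (auto simp: ordered_simplex_def)
        ultimately show False using l N_def by simp
      qed
    qed
    have "?B N = Zero"
    proof
      show "?B N \<subseteq> Zero" using cz lin_zero[OF lin_boundary] by (auto simp: boundaries_def Zero_def)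
      show "Zero \<subseteq> ?B N" by (rule B0)
    qed
    thus ?thesis unfolding b_def using qt_self[OF subsp_Zero lT T0] by simp
  qed
  have hq: "h q = - (r q + b q)" for q using ht[of q] t0[of q] by simp
  have "lefschetz X adj g = (\<Sum>q\<le>N. (-1) ^ q * h q)" unfolding lefschetz_def h_def N_def ..
  also have "\<dots> = - (\<Sum>q\<le>N. (-1) ^ q * (r q + b q))" by (simp add: hq sum_negf[symmetric] algebra_simps)
  also have "\<dots> = 0" using telescope[of r b N, OF r0 rS] bN by simp
  finally show ?thesis .
qed

lemma lefschetz_homotopy:
  assumes fin: "finite X" and di: "digital_image X adj" and fc: "dcontinuous X adj f"
    and gc: "dcontinuous X adj g" and hom: "strongly_homotopic X adj g f"
  shows "lefschetz X adj f = lefschetz X adj g"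
  unfolding lefschetz_def
proof (rule sum.cong[OF refl])
  fix q
  let ?Tf = "chain_map X adj f" and ?Tg = "chain_map X adj g"
  let ?Z = "cycles X adj q" and ?B = "boundaries X adj q"
  have sB: "subsp ?B" by (rule subsp_boundaries)
  obtain cs where cs: "quot_basis ?Z ?B cs"
    using qb_exists[OF subsp_boundaries subsp_cycles boundaries_sub[OF fin] finite_S[OF fin]]
      chains_fin_supp cycles_sub by blast
  have TfZ: "?Tf ` ?Z \<subseteq> ?Z" and TfB: "?Tf ` ?B \<subseteq> ?B" using T_maps[OF fin fc] by blast+
  have TgZ: "?Tg ` ?Z \<subseteq> ?Z" and TgB: "?Tg ` ?B \<subseteq> ?B" using T_maps[OF fin gc] by blast+
  have "trw ?B cs ?Tf = trw ?B cs ?Tg"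
    unfolding trw_def
  proof (rule sum.cong[OF refl])
    fix i assume "i \<in> {..<length cs}"
    hence zZ: "cs ! i \<in> ?Z" using qb_mem[OF cs] by simp
    have gz: "?Tg (cs ! i) \<in> ?Z" and fz: "?Tf (cs ! i) \<in> ?Z" using zZ TfZ TgZ by blast+
    have a: "length (coef ?B cs (?Tg (cs ! i))) = length cs" "eqv ?B (?Tg (cs ! i)) (lincomb (coef ?B cs (?Tg (cs ! i))) cs)"
      using coef_prop[OF cs gz] by auto
    have "eqv ?B (?Tf (cs ! i)) (?Tg (cs ! i))"
      unfolding eqv_def by (rule homotopy_homologous[OF fin di hom zZ])
    hence "eqv ?B (?Tf (cs ! i)) (lincomb (coef ?B cs (?Tg (cs ! i))) cs)" using a(2) eqv_trans[OF sB] by blast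
    hence "coef ?B cs (?Tf (cs ! i)) = coef ?B cs (?Tg (cs ! i))" by (rule coef_unique[OF cs fz a(1)])
    thus "coef ?B cs (?Tf (cs ! i)) ! i = coef ?B cs (?Tg (cs ! i)) ! i" by simp
  qed
  thus "(-1) ^ q * quot_trace ?Z ?B ?Tf = (-1) ^ q * quot_trace ?Z ?B ?Tg"
    using quot_trace_basis[OF sB subsp_cycles lin_chain_map TfZ TfB cs]
      quot_trace_basis[OF sB subsp_cycles lin_chain_map TgZ TgB cs] by simp
qed

theorem corollary3p5:
  fixes X :: "'a set" and adj :: "'a \<Rightarrow> 'a \<Rightarrow> bool" and f g :: "'a \<Rightarrow> 'a"
  assumes "finite X"
    and "digital_image X adj"
    and "dcontinuous X adj f"
    and "lefschetz X adj f \<noteq> 0"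
    and "dcontinuous X adj g"
    and "strongly_homotopic X adj g f"
  shows "(\<exists>x\<in>X. g x = x) \<or>
         (\<exists>x\<in>X. \<exists>y\<in>X. x \<noteq> y \<and> approx_fixed_point adj g x \<and> approx_fixed_point adj g y)"
proof (rule ccontr)
  assume neg: "\<not> ?thesis"
  have gX: "\<And>x. x \<in> X \<Longrightarrow> g x \<in> X" and gcc: "\<And>x y. x \<in> X \<Longrightarrow> y \<in> X \<Longrightarrow> adj x y \<Longrightarrow> adj_eq adj (g x) (g y)"
    using assms(5) by (auto simp: dcontinuous_def)
  have noafp: "\<not> adj_eq adj (g x) x" if x: "x \<in> X" for x
  proof
    assume ax: "adj_eq adj (g x) x"
    have gne: "g x \<noteq> x" using neg x by blast
    hence adjgx: "adj (g x) x" using ax by (simp add: adj_eq_def)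
    define y where "y = g x"
    have yX: "y \<in> X" unfolding y_def by (rule gX[OF x])
    have "adj_eq adj (g y) (g x)" unfolding y_def by (rule gcc[OF gX[OF x] x adjgx])
    hence "approx_fixed_point adj g y" unfolding approx_fixed_point_def y_def .
    moreover have "approx_fixed_point adj g x" using ax by (simp add: approx_fixed_point_def)
    moreover have "x \<noteq> y" using gne unfolding y_def by simp
    ultimately show False using neg x yX by blast
  qed
  have "lefschetz X adj g = 0" by (rule lefschetz_zero[OF assms(1,5) noafp])
  moreover have "lefschetz X adj f = lefschetz X adj g" by (rule lefschetz_homotopy[OF assms(1,2,3,5,6)])
  ultimately show False using assms(4) by simp
qed


end
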